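(* Consider the client selection problem and the COCS policy described in the context, and suppose the Hölder condition holds with constants $L>0$, $\alpha>0$. Let $z=\frac{2\alpha}{3\alpha+2}\in(0,1)$, $\gamma=\frac{z}{2\alpha}$, $\theta=-\frac z2$, $A=\frac{2NMB}{c^{\min}}+\frac{2NMB}{c^{\min}}L2^{\alpha/2}$, and run COCS with $K(t)=t^{z}\log(t)$ and $h_T=\lceil T^{\gamma}\rceil$. Then $$\mathbb{E}[R(T)]\le \frac{4N^2MB}{c^{\min}}\Big(\log(T)T^{\frac{2\alpha+2}{3\alpha+2}}+T^{\frac{2}{3\alpha+2}}\Big)+\frac{NMB}{c^{\min}}\Big(\sum_{k=1}^{B/c^{\min}}\binom{N}{k}\Big)\frac{\pi^2}{3}+\Big(3L2^{\alpha/2}+\frac{2+2L2^{\alpha/2}}{(2\alpha+2)/(3\alpha+2)}\Big)\frac{NMB}{c^{\min}}T^{\frac{2\alpha+2}{3\alpha+2}},$$ where $c^{\min}=\min_{n,t}c_n(y_n^t)$. In particular, $\mathbb{E}[R(T)]=O\big(\frac{4N^2MB}{c^{\min}}T^{\frac{2\alpha+2}{3\alpha+2}}\log(T)\big)$.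
   Context: Setting. There are $N$ clients indexed by $\mathcal N=\{1,\dots,N\}$, $M$ edge servers (ESs) indexed by $\mathcal M=\{1,\dots,M\}$, and rounds $t=1,\dots,T$. In round $t$, ES $m$ can communicate with a set $\mathcal N_m^t\subseteq\mathcal N$ of clients (these sets may overlap). Each client $n$ reveals computation resources $y_n^t$ and charges a cost $c_n(y_n^t)>0$, with $c_n$ nondecreasing; $c^{\min}=\min_{n,t}c_n(y_n^t)$. Each ES has budget $B>0$. A feasible client selection decision in round $t$ is $\bm s^t=(\bm s_1^t,\dots,\bm s_M^t)$ with $\bm s_m^t\subseteq\mathcal N_m^t$, $\sum_{n\in\bm s_m^t}c_n(y_n^t)\le B$ for every $m$, and $\bm s_m^t\cap\bm s_{m'}^t=\emptyset$ for $m\neq m'$. Each client-ES pair $(n,m)$ with $n\in\mathcal N_m^t$ has an observed context $\phi_{n,m}^t\in\Phi=[0,1]^2$. If client $n$ is selected by ES $m$ in round $t$, its participation indicator $X_{n,m}^t\in\{0,1\}$ is Bernoulli with mean $p_{n,m}(\phi_{n,m}^t)$, where $p_{n,m}:\Phi\to[0,1]$ is unknown. The utility is $\mu(\bm s^t;\bm X^t)=\frac1M\sum_{m\in\mathcal M}\sum_{n\in\bm s_m^t}X_{n,m}^t$ (and $\mu(\bm s;\bm p^t)$ is the same with $p_{n,m}(\phi^t_{n,m})$ in place of $X^t_{n,m}$). The oracle decision $\bm s^{\mathrm{opt},t}$ maximizes $\mu(\bm s;\bm p^t)$ over feasible decisions. The expected regret of the policy choosing $\bm s^1,\dots,\bm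 s^T$ is $\mathbb E[R(T)]=\sum_{t=1}^T(\mathbb E[\mu(\bm s^{\mathrm{opt},t};\bm X^t)]-\mathbb E[\mu(\bm s^t;\bm X^t)])$. Hölder condition: there exist $L>0,\alpha>0$ with $|p_{n,m}(\phi)-p_{n,m}(\phi')|\le L\|\phi-\phi'\|^{\alpha}$ for all $\phi,\phi'\in\Phi$ and all pairs $(n,m)$ (Euclidean norm). COCS policy (inputs: increasing function $K$, integer $h_T$). Partition $\Phi$ into $h_T^2$ squares of side $1/h_T$. For each pair $(n,m)$ and square $l$ keep a counter $C_{n,m}(l)$ (initially $0$) and an estimate $\hat p_{n,m}(l)$ equal to the sample mean of indicators observed when $n$ was selected by $m$ with context in $l$. In round $t$: observe contexts, let $l^t_{n,m}$ be the square containing $\phi^t_{n,m}$, set $\hat X^t_{n,m}=\hat p_{n,m}(l^t_{n,m})$; a pair is under-explored if $C_{n,m}(l^t_{n,m})\le K(t)$. If an under-explored pair exists (exploration round), select a feasible decision that first maximizes the number of selected under-explored clients and then spends remaining per-ES budget on explored clients maximizing $\mu(\cdot;\hat{\bm X}^t)$. Otherwise (exploitation round), select a feasible $\bm s^t$ maximizing $\mu(\bm s;\hat{\bm X}^t)$. At the end of the round, for each selected pair observe $X^t_{n,m}$ and update $\hat p_{n,m}(l^t_{n,m})$ (running mean) and $C_{n,m}(l^t_{n,m})$ (increment). *)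

theory Defs
  imports "HOL-Probability.Probability"
begin

(* Conventions:
   clients n \<in> {1..N}, edge servers m \<in> {1..M}, rounds t \<in> {1..T}.
   avail m t   = N_m^t  (clients ES m can reach in round t)
   cost n t    = c_n(y_n^t)
   ctx t n m   = \<phi>_{n,m}^t \<in> [0,1]^2  (as real \<times> real, Euclidean norm)
   A decision is a function s :: nat \<Rightarrow> nat set,  s m = s_m^t.
   An outcome \<omega> :: nat \<times> nat \<times> nat \<Rightarrow> bool gives \<omega>(t,n,m) = X_{n,m}^t. *)

definition Phi :: "(real \<times> real) set" where
  "Phi = {0..1} \<times> {0..1}"

definition feasible ::
  "nat \<Rightarrow> real \<Rightarrow> (nat \<Rightarrow> nat \<Rightarrow> nat set) \<Rightarrow> (nat \<Rightarrow> nat \<Rightarrow> real) \<Rightarrow> nat \<Rightarrow> (nat \<Rightarrow> nat set) \<Rightarrow> bool" where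
  "feasible M B avail cost t s \<longleftrightarrow>
     (\<forall>m\<in>{1..M}. s m \<subseteq> avail m t \<and> (\<Sum>n\<in>s m. cost n t) \<le> B) \<and>
     (\<forall>m\<in>{1..M}. \<forall>m'\<in>{1..M}. m \<noteq> m' \<longrightarrow> s m \<inter> s m' = {})"

definition util :: "nat \<Rightarrow> (nat \<Rightarrow> nat set) \<Rightarrow> (nat \<Rightarrow> nat \<Rightarrow> real) \<Rightarrow> real" where
  "util M s w = (1 / real M) * (\<Sum>m\<in>{1..M}. \<Sum>n\<in>s m. w n m)"

definition Xof :: "(nat \<times> nat \<times> nat \<Rightarrow> bool) \<Rightarrow> nat \<Rightarrow> nat \<Rightarrow> nat \<Rightarrow> real" where
  "Xof \<omega> t n m = (if \<omega> (t, n, m) then 1 else 0)"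

text \<open>Partition of [0,1]^2 into h^2 squares of side 1/h (cells indexed by (i,j), 0 \<le> i,j < h;
  the right/top boundary belongs to the last cell).\<close>
definition cell_idx :: "nat \<Rightarrow> real \<Rightarrow> nat" where
  "cell_idx h x = min (h - 1) (nat \<lfloor>x * real h\<rfloor>)"

definition cell :: "nat \<Rightarrow> real \<times> real \<Rightarrow> nat \<times> nat" where
  "cell h \<phi> = (cell_idx h (fst \<phi>), cell_idx h (snd \<phi>))"

definition cnt ::
  "(nat \<Rightarrow> (nat \<times> nat \<times> nat \<Rightarrow> bool) \<Rightarrow> nat \<Rightarrow> nat set) \<Rightarrow> (nat \<Rightarrow> nat \<Rightarrow> nat \<Rightarrow> real \<times> real) \<Rightarrow> nat
    \<Rightarrow> nat \<Rightarrow> nat \<Rightarrow> nat \<Rightarrow> nat \<times> nat \<Rightarrow> (nat \<times> nat \<times> nat \<Rightarrow> bool) \<Rightarrow> nat" where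
  "cnt sel ctx h t n m l \<omega> = card {t'\<in>{1..<t}. n \<in> sel t' \<omega> m \<and> cell h (ctx t' n m) = l}"

definition succ_cnt ::
  "(nat \<Rightarrow> (nat \<times> nat \<times> nat \<Rightarrow> bool) \<Rightarrow> nat \<Rightarrow> nat set) \<Rightarrow> (nat \<Rightarrow> nat \<Rightarrow> nat \<Rightarrow> real \<times> real) \<Rightarrow> nat
    \<Rightarrow> nat \<Rightarrow> nat \<Rightarrow> nat \<Rightarrow> nat \<times> nat \<Rightarrow> (nat \<times> nat \<times> nat \<Rightarrow> bool) \<Rightarrow> nat" where
  "succ_cnt sel ctx h t n m l \<omega> =
     card {t'\<in>{1..<t}. n \<in> sel t' \<omega> m \<and> cell h (ctx t' n m) = l \<and> \<omega> (t', n, m)}"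

text \<open>Sample-mean estimate hat p_{n,m}(l) (equal to 0 when nothing observed yet).\<close>
definition phat where
  "phat sel ctx h t n m l \<omega> = real (succ_cnt sel ctx h t n m l \<omega>) / real (cnt sel ctx h t n m l \<omega>)"

definition xhat where
  "xhat sel ctx h t \<omega> n m = phat sel ctx h t n m (cell h (ctx t n m)) \<omega>"

definition under_explored where
  "under_explored M avail sel ctx K h t \<omega> =
     {(n, m). m \<in> {1..M} \<and> n \<in> avail m t \<and> real (cnt sel ctx h t n m (cell h (ctx t n m)) \<omega>) \<le> K t}"

definition num_ue :: "nat \<Rightarrow> (nat \<times> nat) set \<Rightarrow> (nat \<Rightarrow> nat set) \<Rightarrow> nat" where
  "num_ue M U s = card {(n, m). m \<in> {1..M} \<and> n \<in> s m \<and> (n, m) \<in> U}"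

text \<open>Exploration round: s maximizes the number of selected under-explored pairs, and, among feasible
  decisions with the same under-explored part, maximizes mu(.; hat X) (i.e. the remaining budget is
  spent on explored clients maximizing the estimated utility).  Ties may be broken arbitrarily.\<close>
definition cocs_choice where
  "cocs_choice M B avail cost ctx K h sel t \<omega> s \<longleftrightarrow>
     (let U = under_explored M avail sel ctx K h t \<omega>;
          xh = xhat sel ctx h t \<omega>;
          fe = feasible M B avail cost t
      in if U \<noteq> {} then
           fe s \<and> (\<forall>s'. fe s' \<longrightarrow> num_ue M U s' \<le> num_ue M U s) \<and>
           (\<forall>s'. fe s' \<and> (\<forall>m\<in>{1..M}. {n\<in>s' m. (n, m) \<in> U} = {n\<in>s m. (n, m) \<in> U})
                 \<longrightarrow> util M s' xh \<le> util M s xh)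
         else
           fe s \<and> (\<forall>s'. fe s' \<longrightarrow> util M s' xh \<le> util M s xh))"

text \<open>sel t omega = s^t for outcome realisation omega. A COCS run: decisions in round t depend only on
  outcomes of rounds < t, and each decision follows the COCS rule.\<close>
definition is_COCS where
  "is_COCS T M B avail cost ctx K h sel \<longleftrightarrow>
     (\<forall>t\<in>{1..T}. \<forall>\<omega> \<omega>'. (\<forall>t' n m. t' < t \<longrightarrow> \<omega> (t', n, m) = \<omega>' (t', n, m)) \<longrightarrow> sel t \<omega> = sel t \<omega>') \<and>
     (\<forall>t\<in>{1..T}. \<forall>\<omega>. cocs_choice M B avail cost ctx K h sel t \<omega> (sel t \<omega>))"

definition outcomes ::
  "nat \<Rightarrow> nat \<Rightarrow> nat \<Rightarrow> (nat \<Rightarrow> nat \<Rightarrow> real \<times> real \<Rightarrow> real) \<Rightarrow> (nat \<Rightarrow> nat \<Rightarrow> nat \<Rightarrow> real \<times> real)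
     \<Rightarrow> (nat \<times> nat \<times> nat \<Rightarrow> bool) pmf" where
  "outcomes T N M p ctx =
     Pi_pmf ({1..T} \<times> {1..N} \<times> {1..M}) False (\<lambda>(t, n, m). bernoulli_pmf (p n m (ctx t n m)))"

definition exp_regret where
  "exp_regret T M \<Omega> sopt sel =
     (\<Sum>t\<in>{1..T}. measure_pmf.expectation \<Omega> (\<lambda>\<omega>. util M (sopt t) (Xof \<omega> t))
                 - measure_pmf.expectation \<Omega> (\<lambda>\<omega>. util M (sel t \<omega>) (Xof \<omega> t)))"

end

theory Submission
  imports Defs "HOL-Analysis.Gamma_Function"
begin

lemma bern_hoeffding:
  fixes q l :: real
  assumes q: "0 \<le> q" "q \<le> 1"
  shows "q * exp (l * (1 - q)) + (1 - q) * exp (- l * q) \<le> exp (l\<^sup>2 / 8)"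
proof (cases "l \<ge> 0")
  case True
  have pos: "1 + q * (exp l - 1) > 0"
    using q True by (intro add_pos_nonneg mult_nonneg_nonneg) auto
  have "q * exp (l * (1 - q)) + (1 - q) * exp (- l * q) = exp (- l * q) * (1 + q * (exp l - 1))"
    by (simp add: algebra_simps flip: exp_add)
  also have "\<dots> = exp (- l * q + ln (1 + q * (exp l - 1)))"
    by (simp only: exp_add exp_ln[OF pos])
  also have "\<dots> \<le> exp (l\<^sup>2 / 8)"
    using Hoeffdings_lemma_aux[of l q] True q by simp
  finally show ?thesis .
next
  case False
  define k where "k = - l"
  have k: "k \<ge> 0" using False k_def by simp
  have pos: "1 + (1 - q) * (exp k - 1) > 0"
    using q k by (intro add_pos_nonneg mult_nonneg_nonneg) auto
  have "q * exp (l * (1 - q)) + (1 - q) * exp (- l * q) = exp (- k * (1 - q)) * (1 + (1 - q) * (exp k - 1))"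
    by (simp add: k_def algebra_simps flip: exp_add)
  also have "\<dots> = exp (- k * (1 - q) + ln (1 + (1 - q) * (exp k - 1)))"
    by (simp only: exp_add exp_ln[OF pos])
  also have "\<dots> \<le> exp (k\<^sup>2 / 8)"
    using Hoeffdings_lemma_aux[of k "1 - q"] k q by simp
  finally show ?thesis by (simp add: k_def)
qed

lemma finite_set_Pi_pmf_bool:
  fixes P :: "'a \<Rightarrow> bool pmf"
  assumes "finite A"
  shows "finite (set_pmf (Pi_pmf A d P))"
proof -
  have "finite (PiE_dflt A d (set_pmf \<circ> P))"
    using assms by (intro finite_PiE_dflt) auto
  then show ?thesis using set_Pi_pmf_subset'[OF assms, of d P] finite_subset by blast
qed

lemma expectation_update_bool:
  fixes P :: "'a \<Rightarrow> bool pmf" and F :: "('a \<Rightarrow> bool) \<Rightarrow> real"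
  assumes "finite A"
  shows "measure_pmf.expectation (map_pmf (\<lambda>f. f(a := y)) (Pi_pmf A d P)) F
       = measure_pmf.expectation (Pi_pmf A d P) (\<lambda>f. F (f(a := y)))"
  by simp

lemma Pi_pmf_coord:
  fixes P :: "'a \<Rightarrow> bool pmf" and F :: "('a \<Rightarrow> bool) \<Rightarrow> real"
  assumes fin: "finite A" and a: "a \<in> A"
  shows "measure_pmf.expectation (Pi_pmf A d P) F =
         measure_pmf.expectation (Pi_pmf A d P)
           (\<lambda>w. pmf (P a) True * F (w(a := True)) + pmf (P a) False * F (w(a := False)))"
proof -
  define A' where "A' = A - {a}"
  define Q where "Q = Pi_pmf A' d P"
  have finA': "finite A'" using fin by (simp add: A'_def)
  have finQ: "finite (set_pmf Q)" unfolding Q_def by (rule finite_set_Pi_pmf_bool[OF finA'])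
  have intQ: "integrable (measure_pmf Q) g" for g :: "_ \<Rightarrow> real"
    by (rule integrable_measure_pmf_finite[OF finQ])
  have AA: "A = insert a A'" using a by (auto simp: A'_def)
  have decomp: "Pi_pmf A d P = P a \<bind> (\<lambda>y. map_pmf (\<lambda>f. f(a := y)) Q)"
    unfolding AA Q_def
    by (subst Pi_pmf_insert') (auto simp: fin finA' A'_def map_pmf_def)
  have E: "measure_pmf.expectation (Pi_pmf A d P) G =
           pmf (P a) True * measure_pmf.expectation Q (\<lambda>f. G (f(a := True))) +
           pmf (P a) False * measure_pmf.expectation Q (\<lambda>f. G (f(a := False)))" for G :: "_ \<Rightarrow> real"
  proof -
    have "measure_pmf.expectation (Pi_pmf A d P) G =
          (\<Sum>y\<in>UNIV. pmf (P a) y *\<^sub>R measure_pmf.expectation (map_pmf (\<lambda>f. f(a := y)) Q) G)"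
      unfolding decomp by (rule pmf_expectation_bind) (auto simp: finQ)
    also have "\<dots> = pmf (P a) True * measure_pmf.expectation Q (\<lambda>f. G (f(a := True))) +
           pmf (P a) False * measure_pmf.expectation Q (\<lambda>f. G (f(a := False)))"
      by (simp add: UNIV_bool)
    finally show ?thesis .
  qed
  have one: "pmf (P a) True + pmf (P a) False = 1"
  proof -
    have "(\<Sum>y\<in>UNIV. pmf (P a) y) = 1"
      by (rule sum_pmf_eq_1) auto
    then show ?thesis by (simp add: UNIV_bool add.commute)
  qed
  define G where "G = (\<lambda>w. pmf (P a) True * F (w(a := True)) + pmf (P a) False * F (w(a := False)))"
  have Gupd: "G (f(a := y)) = G f" for f y by (simp add: G_def)
  have "measure_pmf.expectation (Pi_pmf A d P) G = (pmf (P a) True + pmf (P a) False) * measure_pmf.expectation Q G"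
    unfolding E Gupd by (simp add: algebra_simps)
  also have "\<dots> = measure_pmf.expectation Q G" using one by simp
  also have "\<dots> = pmf (P a) True * measure_pmf.expectation Q (\<lambda>f. F (f(a := True))) +
           pmf (P a) False * measure_pmf.expectation Q (\<lambda>f. F (f(a := False)))"
    unfolding G_def by (simp add: intQ)
  also have "\<dots> = measure_pmf.expectation (Pi_pmf A d P) F"
    by (rule E[symmetric])
  finally show ?thesis by (simp add: G_def)
qed

lemma sum_inverse_squares_le:
  "(\<Sum>t=1..T. 1 / (real t)\<^sup>2) \<le> pi\<^sup>2 / 6"
proof -
  have "(\<Sum>t=1..T. 1 / (real t)\<^sup>2) = (\<Sum>n<T. 1 / real ((n + 1)\<^sup>2))"
    by (rule sum.reindex_bij_witness[of _ "\<lambda>n. n + 1" "\<lambda>t. t - 1"]) auto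
  also have "\<dots> \<le> (\<Sum>n. 1 / real ((n + 1)\<^sup>2))"
    by (rule sum_le_suminf) (use inverse_squares_sums in \<open>auto simp: sums_iff\<close>)
  also have "\<dots> = pi\<^sup>2 / 6" using inverse_squares_sums by (simp add: sums_iff)
  finally show ?thesis .
qed

lemma powr_step:
  fixes a x :: real
  assumes a: "0 \<le> a" "a < 1" and x: "x \<ge> 1"
  shows "(x + 1) powr (-a) \<le> ((x + 1) powr (1 - a) - x powr (1 - a)) / (1 - a)"
proof -
  have der: "\<And>u. x \<le> u \<Longrightarrow> u \<le> x + 1 \<Longrightarrow> DERIV (\<lambda>u. u powr (1 - a)) u :> (1 - a) * u powr (1 - a - 1)"
    using x by (auto intro!: derivative_eq_intros)
  obtain u where u: "x < u" "u < x + 1"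
    and eq: "(x + 1) powr (1 - a) - x powr (1 - a) = (x + 1 - x) * ((1 - a) * u powr (1 - a - 1))"
    using MVT2[of x "x + 1", OF _ der] by auto
  have "(x + 1) powr (-a) \<le> u powr (-a)"
    using u x a by (intro powr_mono2') auto
  moreover have "((x + 1) powr (1 - a) - x powr (1 - a)) / (1 - a) = u powr (-a)"
  proof -
    have "1 - a - 1 = - a" by simp
    then show ?thesis using eq a by simp
  qed
  ultimately show ?thesis by simp
qed

lemma sum_powr_le:
  fixes a :: real
  assumes a: "0 \<le> a" "a < 1" and T: "T \<ge> 1"
  shows "(\<Sum>t=1..T. real t powr (-a)) \<le> real T powr (1 - a) / (1 - a)"
  using T
proof (induction T rule: dec_induct)
  case base
  then show ?case using a by (simp add: field_simps)
next
  case (step n)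
  have "(\<Sum>t=1..Suc n. real t powr (-a)) = (\<Sum>t=1..n. real t powr (-a)) + (real n + 1) powr (-a)"
    by (simp add: add.commute)
  also have "\<dots> \<le> real n powr (1 - a) / (1 - a) + ((real n + 1) powr (1 - a) - real n powr (1 - a)) / (1 - a)"
    using step powr_step[of a "real n"] a by (intro add_mono) auto
  also have "\<dots> = real (Suc n) powr (1 - a) / (1 - a)"
    by (simp add: diff_divide_distrib add.commute)
  finally show ?case .
qed

locale setting =
  fixes N M T :: nat and B L \<alpha> :: real
    and avail :: "nat \<Rightarrow> nat \<Rightarrow> nat set"
    and y :: "nat \<Rightarrow> nat \<Rightarrow> real" and c :: "nat \<Rightarrow> real \<Rightarrow> real"
    and ctx :: "nat \<Rightarrow> nat \<Rightarrow> nat \<Rightarrow> real \<times> real"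
    and p :: "nat \<Rightarrow> nat \<Rightarrow> real \<times> real \<Rightarrow> real"
    and sopt :: "nat \<Rightarrow> nat \<Rightarrow> nat set"
    and sel :: "nat \<Rightarrow> (nat \<times> nat \<times> nat \<Rightarrow> bool) \<Rightarrow> nat \<Rightarrow> nat set"
  assumes N: "N \<ge> 1" and M: "M \<ge> 1" and T: "T \<ge> 1" and B: "B > 0"
    and avail: "\<And>m t. m \<in> {1..M} \<Longrightarrow> t \<in> {1..T} \<Longrightarrow> avail m t \<subseteq> {1..N}"
    and c_pos: "\<And>n t. n \<in> {1..N} \<Longrightarrow> t \<in> {1..T} \<Longrightarrow> c n (y n t) > 0"
    and ctx: "\<And>t n m. t \<in> {1..T} \<Longrightarrow> m \<in> {1..M} \<Longrightarrow> n \<in> avail m t \<Longrightarrow> ctx t n m \<in> Phi"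
    and p01: "\<And>n m \<phi>. n \<in> {1..N} \<Longrightarrow> m \<in> {1..M} \<Longrightarrow> \<phi> \<in> Phi \<Longrightarrow> p n m \<phi> \<in> {0..1}"
    and L: "L > 0" and \<alpha>: "\<alpha> > 0"
    and holder: "\<And>n m \<phi> \<phi>'. n \<in> {1..N} \<Longrightarrow> m \<in> {1..M} \<Longrightarrow> \<phi> \<in> Phi \<Longrightarrow> \<phi>' \<in> Phi \<Longrightarrow>
                   \<bar>p n m \<phi> - p n m \<phi>'\<bar> \<le> L * dist \<phi> \<phi>' powr \<alpha>"
    and opt: "\<And>t. t \<in> {1..T} \<Longrightarrow>
                feasible M B avail (\<lambda>n t. c n (y n t)) t (sopt t) \<and>
                (\<forall>s. feasible M B avail (\<lambda>n t. c n (y n t)) t s \<longrightarrow>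
                   util M s (\<lambda>n m. p n m (ctx t n m)) \<le> util M (sopt t) (\<lambda>n m. p n m (ctx t n m)))"
    and policy: "is_COCS T M B avail (\<lambda>n t. c n (y n t)) ctx
                   (\<lambda>t. real t powr (2 * \<alpha> / (3 * \<alpha> + 2)) * ln (real t))
                   (nat \<lceil>real T powr ((2 * \<alpha> / (3 * \<alpha> + 2)) / (2 * \<alpha>))\<rceil>) sel"
begin

abbreviation "cost \<equiv> (\<lambda>n t. c n (y n t))"
abbreviation "z \<equiv> 2 * \<alpha> / (3 * \<alpha> + 2)"
abbreviation "K \<equiv> (\<lambda>t. real t powr (2 * \<alpha> / (3 * \<alpha> + 2)) * ln (real t))"
abbreviation "h \<equiv> nat \<lceil>real T powr ((2 * \<alpha> / (3 * \<alpha> + 2)) / (2 * \<alpha>))\<rceil>"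
abbreviation "cmin \<equiv> Min {c n (y n t) | n t. n \<in> {1..N} \<and> t \<in> {1..T}}"
abbreviation "D \<equiv> B / cmin"
abbreviation "Om \<equiv> outcomes T N M p ctx"
abbreviation "AA \<equiv> {1..T} \<times> {1..N} \<times> {1..M}"

lemma cset_eq: "{c n (y n t) | n t. n \<in> {1..N} \<and> t \<in> {1..T}} = (\<lambda>(n, t). c n (y n t)) ` ({1..N} \<times> {1..T})"
  by force

lemma cmin_pos: "cmin > 0"
proof -
  have fin: "finite {c n (y n t) | n t. n \<in> {1..N} \<and> t \<in> {1..T}}" unfolding cset_eq by auto
  have ne: "{c n (y n t) | n t. n \<in> {1..N} \<and> t \<in> {1..T}} \<noteq> {}" using N T by auto
  from Min_in[OF fin ne] c_pos show ?thesis by auto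
qed

lemma cset_fin: "finite {c n (y n t) | n t. n \<in> {1..N} \<and> t \<in> {1..T}}"
  unfolding cset_eq by auto

lemma cmin_le: "n \<in> {1..N} \<Longrightarrow> t \<in> {1..T} \<Longrightarrow> cmin \<le> c n (y n t)"
  by (rule Min_le[OF cset_fin]) blast

lemma feas_sub: "feasible M B avail cost t s \<Longrightarrow> t \<in> {1..T} \<Longrightarrow> m \<in> {1..M} \<Longrightarrow> s m \<subseteq> {1..N}"
proof -
  assume fe: "feasible M B avail cost t s" and t: "t \<in> {1..T}" and m: "m \<in> {1..M}"
  from fe m have "s m \<subseteq> avail m t" unfolding feasible_def by simp
  then show "s m \<subseteq> {1..N}" using avail[OF m t] by (rule order_trans)
qed

lemma feas_fin: "feasible M B avail cost t s \<Longrightarrow> t \<in> {1..T} \<Longrightarrow> m \<in> {1..M} \<Longrightarrow> finite (s m)"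
  using feas_sub by (meson finite_atLeastAtMost finite_subset)

lemma feas_card: 
  assumes "feasible M B avail cost t s" "t \<in> {1..T}" "m \<in> {1..M}"
  shows "real (card (s m)) \<le> D"
proof -
  have "real (card (s m)) * cmin = (\<Sum>n\<in>s m. cmin)" by simp
  also have "\<dots> \<le> (\<Sum>n\<in>s m. cost n t)"
    using feas_sub[OF assms] assms(2) by (intro sum_mono cmin_le) auto
  also have "\<dots> \<le> B" using assms unfolding feasible_def by auto
  finally show ?thesis using cmin_pos by (simp add: field_simps)
qed

lemma util_diff_le:
  assumes "feasible M B avail cost t s" "t \<in> {1..T}" "\<epsilon> \<ge> 0"
    and "\<And>m n. m \<in> {1..M} \<Longrightarrow> n \<in> s m \<Longrightarrow> w1 n m - w2 n m \<le> \<epsilon>"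
  shows "util M s w1 - util M s w2 \<le> D * \<epsilon>"
proof -
  have "util M s w1 - util M s w2 = (1 / real M) * (\<Sum>m\<in>{1..M}. \<Sum>n\<in>s m. w1 n m - w2 n m)"
    by (simp add: util_def sum_subtractf right_diff_distrib)
  also have "\<dots> \<le> (1 / real M) * (\<Sum>m\<in>{1..M}. D * \<epsilon>)"
  proof (intro mult_left_mono sum_mono)
    fix m assume m: "m \<in> {1..M}"
    have "(\<Sum>n\<in>s m. w1 n m - w2 n m) \<le> (\<Sum>n\<in>s m. \<epsilon>)" using assms(4)[OF m] by (intro sum_mono) auto
    also have "\<dots> = real (card (s m)) * \<epsilon>" by simp
    also have "\<dots> \<le> D * \<epsilon>" using feas_card[OF assms(1,2) m] assms(3) by (intro mult_right_mono) auto
    finally show "(\<Sum>n\<in>s m. w1 n m - w2 n m) \<le> D * \<epsilon>" .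
  qed simp
  also have "\<dots> = D * \<epsilon>" using M by simp
  finally show ?thesis .
qed

lemma util_nonneg:
  assumes "\<And>m n. m \<in> {1..M} \<Longrightarrow> n \<in> s m \<Longrightarrow> w n m \<ge> 0"
  shows "util M s w \<ge> 0"
  unfolding util_def using assms by (intro mult_nonneg_nonneg sum_nonneg) auto

lemma util_le_D:
  assumes "feasible M B avail cost t s" "t \<in> {1..T}"
    and "\<And>m n. m \<in> {1..M} \<Longrightarrow> n \<in> s m \<Longrightarrow> w n m \<le> 1"
  shows "util M s w \<le> D"
  using util_diff_le[OF assms(1,2), of 1 w "\<lambda>_ _. 0"] assms(3) by (simp add: util_def)

lemma finite_Om: "finite (set_pmf Om)"
  unfolding outcomes_def by (rule finite_set_Pi_pmf_bool) auto

lemma int_Om[simp, intro]: "integrable (measure_pmf Om) (f :: _ \<Rightarrow> real)"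
  by (rule integrable_measure_pmf_finite[OF finite_Om])

end

definition past_dep :: "nat \<Rightarrow> ((nat \<times> nat \<times> nat \<Rightarrow> bool) \<Rightarrow> 'b) \<Rightarrow> bool" where
  "past_dep t F \<longleftrightarrow> (\<forall>w w'. (\<forall>t' n m. t' < t \<longrightarrow> w (t', n, m) = w' (t', n, m)) \<longrightarrow> F w = F w')"

lemma past_dep_upd:
  assumes "past_dep t F" "fst a \<ge> t"
  shows "F (w(a := x)) = F w"
proof -
  have "\<forall>t' n m. t' < t \<longrightarrow> (w(a := x)) (t', n, m) = w (t', n, m)"
    using assms(2) by auto
  then show ?thesis using assms(1) unfolding past_dep_def by blast
qed


lemma sum_subset_if: "finite A \<Longrightarrow> B \<subseteq> A \<Longrightarrow> sum f B = (\<Sum>x\<in>A. if x \<in> B then f x else 0)"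
  by (simp add: sum.If_cases Int_absorb1)

context setting
begin

lemma sel_past: "t \<in> {1..T} \<Longrightarrow> past_dep t (sel t)"
  using policy unfolding is_COCS_def past_dep_def by blast

lemma sel_choice: "t \<in> {1..T} \<Longrightarrow> cocs_choice M B avail cost ctx K h sel t w (sel t w)"
  using policy unfolding is_COCS_def by blast

lemma sel_feas: "t \<in> {1..T} \<Longrightarrow> feasible M B avail cost t (sel t w)"
  using sel_choice[of t w] unfolding cocs_choice_def Let_def by (auto split: if_splits)

lemma coord_Om:
  assumes t: "t \<in> {1..T}" and m: "m \<in> {1..M}" and n: "n \<in> avail m t"
  shows "measure_pmf.expectation Om F =
         measure_pmf.expectation Om (\<lambda>w. p n m (ctx t n m) * F (w((t, n, m) := True))
                                     + (1 - p n m (ctx t n m)) * F (w((t, n, m) := False)))"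
proof -
  have nN: "n \<in> {1..N}" using avail[OF m t] n by auto
  have q: "p n m (ctx t n m) \<in> {0..1}" using p01[OF nN m ctx[OF t m n]] .
  have a: "(t, n, m) \<in> AA" using t nN m by auto
  show ?thesis
    unfolding outcomes_def
    by (subst Pi_pmf_coord[OF _ a]) (use q in auto)
qed

lemma indep_util:
  assumes t: "t \<in> {1..T}" and dep: "past_dep t S" and fe: "\<And>w. feasible M B avail cost t (S w)"
  shows "measure_pmf.expectation Om (\<lambda>w. util M (S w) (Xof w t)) =
         measure_pmf.expectation Om (\<lambda>w. util M (S w) (\<lambda>n m. p n m (ctx t n m)))"
proof -
  have U: "util M (S w) g = (1 / real M) * (\<Sum>m\<in>{1..M}. \<Sum>n\<in>{1..N}. if n \<in> S w m then g n m else 0)"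
    for w and g :: "nat \<Rightarrow> nat \<Rightarrow> real"
    unfolding util_def
    by (intro arg_cong[where f="\<lambda>x. (1 / real M) * x"] sum.cong refl sum_subset_if)
       (use feas_sub[OF fe t] in auto)
  have key: "measure_pmf.expectation Om (\<lambda>w. if n \<in> S w m then Xof w t n m else 0) =
             measure_pmf.expectation Om (\<lambda>w. if n \<in> S w m then p n m (ctx t n m) else 0)"
    if m: "m \<in> {1..M}" and nN: "n \<in> {1..N}" for n m
  proof (cases "n \<in> avail m t")
    case False
    then have "n \<notin> S w m" for w using fe[of w] m unfolding feasible_def by auto
    then show ?thesis by simp
  next
    case True
    have upd: "S (w((t, n, m) := x)) = S w" for w x
      by (rule past_dep_upd[OF dep]) simp
    have pw: "p n m (ctx t n m) * (if n \<in> S (w((t, n, m) := True)) m then Xof (w((t, n, m) := True)) t n m else 0)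
      + (1 - p n m (ctx t n m)) * (if n \<in> S (w((t, n, m) := False)) m then Xof (w((t, n, m) := False)) t n m else 0)
      = (if n \<in> S w m then p n m (ctx t n m) else 0)" for w
      by (simp add: upd Xof_def)
    show ?thesis
      by (subst coord_Om[OF t m True]) (simp only: pw)
  qed
  show ?thesis
    unfolding U
    by (simp add: key del: of_nat_Suc)
qed

end

context setting
begin

definition Ind where "Ind n m l t' w \<longleftrightarrow> n \<in> sel t' w m \<and> cell h (ctx t' n m) = l"

definition W where
  "W n m l lam j w = exp (\<Sum>t'\<in>{1..<j}. if Ind n m l t' w
       then lam * (Xof w t' n m - p n m (ctx t' n m)) - lam\<^sup>2 / 8 else 0)"

definition dev where
  "dev n m l t w = real (succ_cnt sel ctx h t n m l w) - (\<Sum>t'\<in>{t'\<in>{1..<t}. Ind n m l t' w}. p n m (ctx t' n m))"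

lemma W_pos: "W n m l lam j w > 0"
  by (simp add: W_def)

lemma Ind_past: "t' \<in> {1..T} \<Longrightarrow> past_dep t' (Ind n m l t')"
  using sel_past[of t'] unfolding past_dep_def Ind_def by metis

lemma W_past: "j \<le> T + 1 \<Longrightarrow> past_dep j (W n m l lam j)"
  unfolding past_dep_def
proof (intro allI impI)
  fix w w' :: "nat \<times> nat \<times> nat \<Rightarrow> bool"
  assume j: "j \<le> T + 1" and agree: "\<forall>t' n m. t' < j \<longrightarrow> w (t', n, m) = w' (t', n, m)"
  have eqs: "(if Ind n m l t' w then lam * (Xof w t' n m - p n m (ctx t' n m)) - lam\<^sup>2 / 8 else 0) =
        (if Ind n m l t' w' then lam * (Xof w' t' n m - p n m (ctx t' n m)) - lam\<^sup>2 / 8 else 0)"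
    if t': "t' \<in> {1..<j}" for t'
  proof -
    have tT: "t' \<in> {1..T}" using t' j by auto
    have "Ind n m l t' w = Ind n m l t' w'"
      using Ind_past[OF tT] agree t' unfolding past_dep_def by auto
    moreover have "Xof w t' n m = Xof w' t' n m" using agree t' by (auto simp: Xof_def)
    ultimately show ?thesis by simp
  qed
  show "W n m l lam j w = W n m l lam j w'"
    unfolding W_def by (intro arg_cong[where f=exp] sum.cong refl eqs)
qed

lemma W_step:
  "j \<ge> 1 \<Longrightarrow> W n m l lam (Suc j) w = W n m l lam j w *
     exp (if Ind n m l j w then lam * (Xof w j n m - p n m (ctx j n m)) - lam\<^sup>2 / 8 else 0)"
  unfolding W_def by (simp add: exp_add[symmetric] add.commute)

lemma W_exp_le:
  assumes "j \<le> T + 1" "n \<in> {1..N}" "m \<in> {1..M}"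
  shows "measure_pmf.expectation Om (W n m l lam j) \<le> 1"
  using assms(1)
proof (induction j)
  case 0
  then show ?case by (simp add: W_def)
next
  case (Suc j)
  show ?case
  proof (cases "j = 0")
    case True
    then show ?thesis by (simp add: W_def)
  next
    case False
    then have jT: "j \<in> {1..T}" using Suc.prems by auto
    have IH: "measure_pmf.expectation Om (W n m l lam j) \<le> 1" using Suc by simp
    show ?thesis
    proof (cases "n \<in> avail m j")
      case False
      have "\<not> Ind n m l j w" for w
        using sel_feas[OF jT, of w] False assms(3) unfolding feasible_def Ind_def by auto
      then have "W n m l lam (Suc j) = W n m l lam j"
        using W_step[of j] jT by (auto simp: fun_eq_iff)
      then show ?thesis using IH by simp
    next
      case True
      define q where "q = p n m (ctx j n m)"
      have q: "0 \<le> q" "q \<le> 1" using p01[OF assms(2,3) ctx[OF jT assms(3) True]] by (auto simp: q_def)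
      have Wp: "past_dep j (W n m l lam j)" using W_past[of j] jT by auto
      have Ip: "past_dep j (Ind n m l j)" using Ind_past[OF jT] .
      have upd: "W n m l lam (Suc j) (w((j, n, m) := x)) = W n m l lam j w *
           exp (if Ind n m l j w then lam * ((if x then 1 else 0) - q) - lam\<^sup>2 / 8 else 0)" for w x
        using W_step[of j n m l lam "w((j, n, m) := x)"] jT past_dep_upd[OF Wp, of "(j, n, m)" w x]
          past_dep_upd[OF Ip, of "(j, n, m)" w x]
        by (simp add: Xof_def q_def)
      have pw: "q * W n m l lam (Suc j) (w((j, n, m) := True)) + (1 - q) * W n m l lam (Suc j) (w((j, n, m) := False))
                \<le> W n m l lam j w" for w
      proof (cases "Ind n m l j w")
        case False
        then show ?thesis unfolding upd by (simp add: algebra_simps)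
      next
        case True
        have "q * exp (lam * (1 - q) - lam\<^sup>2 / 8) + (1 - q) * exp (lam * (0 - q) - lam\<^sup>2 / 8)
              = (q * exp (lam * (1 - q)) + (1 - q) * exp (- lam * q)) * exp (- (lam\<^sup>2 / 8))"
        proof -
          have e1: "exp (lam * (1 - q) - lam\<^sup>2 / 8) = exp (lam * (1 - q)) * exp (- (lam\<^sup>2 / 8))"
            by (simp add: exp_add[symmetric])
          have e2: "exp (lam * (0 - q) - lam\<^sup>2 / 8) = exp (- lam * q) * exp (- (lam\<^sup>2 / 8))"
            by (simp add: exp_add[symmetric])
          show ?thesis unfolding e1 e2 by (simp add: algebra_simps)
        qed
        also have "\<dots> \<le> exp (lam\<^sup>2 / 8) * exp (- (lam\<^sup>2 / 8))"
          by (intro mult_right_mono bern_hoeffding q) auto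
        also have "\<dots> = 1" by (simp flip: exp_add)
        finally have *: "q * exp (lam * (1 - q) - lam\<^sup>2 / 8) + (1 - q) * exp (lam * (0 - q) - lam\<^sup>2 / 8) \<le> 1" .
        have "q * W n m l lam (Suc j) (w((j, n, m) := True)) + (1 - q) * W n m l lam (Suc j) (w((j, n, m) := False))
              = W n m l lam j w * (q * exp (lam * (1 - q) - lam\<^sup>2 / 8) + (1 - q) * exp (lam * (0 - q) - lam\<^sup>2 / 8))"
          unfolding upd using True by (simp add: algebra_simps)
        also have "\<dots> \<le> W n m l lam j w * 1"
          using * W_pos[of n m l lam j w] by (intro mult_left_mono) auto
        finally show ?thesis by simp
      qed
      have "measure_pmf.expectation Om (W n m l lam (Suc j)) =
            measure_pmf.expectation Om (\<lambda>w. q * W n m l lam (Suc j) (w((j, n, m) := True)) + (1 - q) * W n m l lam (Suc j) (w((j, n, m) := False)))"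
        unfolding q_def by (rule coord_Om[OF jT assms(3) True])
      also have "\<dots> \<le> measure_pmf.expectation Om (W n m l lam j)"
        by (intro integral_mono pw) auto
      finally show ?thesis using IH by simp
    qed
  qed
qed

lemma cnt_eq: "cnt sel ctx h t n m l w = card {t'\<in>{1..<t}. Ind n m l t' w}"
  by (simp add: cnt_def Ind_def)

lemma W_eq_dev: "W n m l lam t w = exp (lam * dev n m l t w - lam\<^sup>2 / 8 * real (cnt sel ctx h t n m l w))"
proof -
  let ?S = "{t'\<in>{1..<t}. Ind n m l t' w}"
  have "(\<Sum>t'\<in>{1..<t}. if Ind n m l t' w then lam * (Xof w t' n m - p n m (ctx t' n m)) - lam\<^sup>2 / 8 else 0)
        = (\<Sum>t'\<in>?S. lam * (Xof w t' n m - p n m (ctx t' n m)) - lam\<^sup>2 / 8)"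
    by (subst sum.inter_filter) auto
  also have "\<dots> = lam * ((\<Sum>t'\<in>?S. Xof w t' n m) - (\<Sum>t'\<in>?S. p n m (ctx t' n m))) - lam\<^sup>2 / 8 * real (card ?S)"
    by (simp add: sum_subtractf sum_distrib_left right_diff_distrib)
  also have "(\<Sum>t'\<in>?S. Xof w t' n m) = real (succ_cnt sel ctx h t n m l w)"
  proof -
    have "(\<Sum>t'\<in>?S. Xof w t' n m) = (\<Sum>t'\<in>?S. of_bool (w (t', n, m)))"
      by (intro sum.cong) (auto simp: Xof_def)
    also have "\<dots> = real (card (?S \<inter> {t'. w (t', n, m)}))" by (rule sum_of_bool_eq) auto
    also have "?S \<inter> {t'. w (t', n, m)} = {t'\<in>{1..<t}. n \<in> sel t' w m \<and> cell h (ctx t' n m) = l \<and> w (t', n, m)}"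
      by (auto simp: Ind_def)
    finally show ?thesis by (simp add: succ_cnt_def)
  qed
  finally show ?thesis unfolding W_def dev_def cnt_eq by simp
qed

lemma markov_dev:
  assumes t: "t \<in> {1..T}" and n: "n \<in> {1..N}" and m: "m \<in> {1..M}"
  shows "measure_pmf.expectation Om
          (\<lambda>w. of_bool (lam * dev n m l t w - lam\<^sup>2 / 8 * real (cnt sel ctx h t n m l w) \<ge> cc)) \<le> exp (- cc)"
proof -
  have pw: "of_bool (lam * dev n m l t w - lam\<^sup>2 / 8 * real (cnt sel ctx h t n m l w) \<ge> cc)
            \<le> exp (- cc) * W n m l lam t w" for w
  proof (cases "lam * dev n m l t w - lam\<^sup>2 / 8 * real (cnt sel ctx h t n m l w) \<ge> cc")
    case True
    then have "exp cc \<le> W n m l lam t w" unfolding W_eq_dev by simp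
    then have "1 \<le> exp (- cc) * W n m l lam t w"
      by (simp add: exp_minus field_simps)
    then show ?thesis using True by simp
  next
    case False
    then show ?thesis using W_pos[of n m l lam t w] by simp
  qed
  have "measure_pmf.expectation Om
          (\<lambda>w. of_bool (lam * dev n m l t w - lam\<^sup>2 / 8 * real (cnt sel ctx h t n m l w) \<ge> cc))
        \<le> measure_pmf.expectation Om (\<lambda>w. exp (- cc) * W n m l lam t w)"
    by (intro integral_mono pw) auto
  also have "\<dots> = exp (- cc) * measure_pmf.expectation Om (W n m l lam t)" by simp
  also have "\<dots> \<le> exp (- cc) * 1"
    using W_exp_le[of t n m l lam] t n m by (intro mult_left_mono) auto
  finally show ?thesis by simp
qed

end

context setting
begin

abbreviation "Hf \<equiv> (\<lambda>t::nat. real t powr (- (z / 2)))"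

definition Bad where
  "Bad t w \<longleftrightarrow> (\<exists>m\<in>{1..M}. \<exists>n\<in>avail m t.
      real (cnt sel ctx h t n m (cell h (ctx t n m)) w) > K t \<and>
      \<bar>dev n m (cell h (ctx t n m)) t w\<bar> > Hf t * real (cnt sel ctx h t n m (cell h (ctx t n m)) w))"

lemma z_pos: "z > 0" using \<alpha> by simp
lemma z_lt1: "z < 1" using \<alpha> by (simp add: field_simps)

lemma HK: "t \<ge> 1 \<Longrightarrow> (Hf t)\<^sup>2 * K t = ln (real t)"
proof -
  assume t: "t \<ge> 1"
  have tp: "real t > 0" using t by simp
  have "(Hf t)\<^sup>2 = real t powr (- (z / 2) + - (z / 2))"
    using t by (simp only: power2_eq_square powr_add)
  also have "- (z / 2) + - (z / 2) = - z" by linarith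
  finally have h2: "(Hf t)\<^sup>2 = real t powr (- z)" .
  have "real t powr (- z) * real t powr z = real t powr (- z + z)"
    by (simp only: powr_add)
  also have "\<dots> = 1" using tp by simp
  finally have one: "real t powr (- z) * real t powr z = 1" .
  have "(Hf t)\<^sup>2 * K t = (real t powr (- z) * real t powr z) * ln (real t)"
    by (simp only: h2 mult.assoc)
  then show ?thesis by (simp only: one mult_1)
qed

lemma exp_2ln: "t \<ge> 1 \<Longrightarrow> exp (- (2 * ln (real t))) = 1 / (real t)\<^sup>2"
proof -
  assume t: "t \<ge> 1"
  have tp: "real t > 0" using t by simp
  have "exp (2 * ln (real t)) = exp (ln (real t)) * exp (ln (real t))"
    by (simp only: mult_2 exp_add)
  also have "\<dots> = (real t)\<^sup>2" using tp by (simp only: exp_ln power2_eq_square)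
  finally have e: "exp (2 * ln (real t)) = (real t)\<^sup>2" .
  show ?thesis by (simp only: exp_minus e inverse_eq_divide)
qed

lemma Bad_exp:
  assumes t: "t \<in> {1..T}"
  shows "measure_pmf.expectation Om (\<lambda>w. of_bool (Bad t w)) \<le> 2 * real N * real M / (real t)\<^sup>2"
proof -
  define H where "H = Hf t"
  have H: "H > 0" using t by (simp add: H_def)
  define lc where "lc = (\<lambda>n m. cell h (ctx t n m))"
  define Ep where "Ep = (\<lambda>n m w. (4 * H) * dev n m (lc n m) t w - (4 * H)\<^sup>2 / 8 * real (cnt sel ctx h t n m (lc n m) w) \<ge> 2 * ln (real t))"
  define Em where "Em = (\<lambda>n m w. (- 4 * H) * dev n m (lc n m) t w - (- 4 * H)\<^sup>2 / 8 * real (cnt sel ctx h t n m (lc n m) w) \<ge> 2 * ln (real t))"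
  define G where "G = (\<lambda>w. \<Sum>m\<in>{1..M}. \<Sum>n\<in>{1..N}. of_bool (Ep n m w) + of_bool (Em n m w) :: real)"
  have K0: "K t \<ge> 0" using t by simp
  have HK': "H\<^sup>2 * K t = ln (real t)" using HK t by (simp add: H_def)
  have pw: "of_bool (Bad t w) \<le> G w" for w
  proof (cases "Bad t w")
    case False
    then show ?thesis by (simp add: G_def sum_nonneg)
  next
    case True
    then obtain m n where m: "m \<in> {1..M}" and na: "n \<in> avail m t"
      and k: "real (cnt sel ctx h t n m (lc n m) w) > K t"
      and d: "\<bar>dev n m (lc n m) t w\<bar> > H * real (cnt sel ctx h t n m (lc n m) w)"
      unfolding Bad_def H_def lc_def by blast
    have nN: "n \<in> {1..N}" using avail[OF m t] na by auto
    define k' where "k' = real (cnt sel ctx h t n m (lc n m) w)"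
    define dv where "dv = dev n m (lc n m) t w"
    have k'': "k' > K t" using k by (simp add: k'_def)
    have d': "\<bar>dv\<bar> > H * k'" using d by (simp add: k'_def dv_def)
    have "H\<^sup>2 * K t \<le> H\<^sup>2 * k'"
      by (rule mult_left_mono) (use k'' in auto)
    then have base: "2 * H\<^sup>2 * k' \<ge> 2 * ln (real t)"
      using HK' by simp
    have "Ep n m w \<or> Em n m w"
    proof (cases "dv \<ge> 0")
      case True
      then have "dv > H * k'" using d' by simp
      then have "4 * H * dv \<ge> 4 * H * (H * k')" using H by (intro mult_left_mono) auto
      then have "Ep n m w" using base unfolding Ep_def k'_def[symmetric] dv_def[symmetric]
        by (simp add: power2_eq_square algebra_simps)
      then show ?thesis ..
    next
      case False
      then have "- dv > H * k'" using d' by simp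
      then have "4 * H * (- dv) \<ge> 4 * H * (H * k')" using H by (intro mult_left_mono) auto
      then have "Em n m w" using base unfolding Em_def k'_def[symmetric] dv_def[symmetric]
        by (simp add: power2_eq_square algebra_simps)
      then show ?thesis ..
    qed
    then have one: "1 \<le> of_bool (Ep n m w) + (of_bool (Em n m w) :: real)" by auto
    have "1 \<le> (\<Sum>n\<in>{1..N}. of_bool (Ep n m w) + (of_bool (Em n m w) :: real))"
    proof (rule order_trans[OF one])
      show "of_bool (Ep n m w) + (of_bool (Em n m w) :: real) \<le> (\<Sum>n\<in>{1..N}. of_bool (Ep n m w) + (of_bool (Em n m w) :: real))"
        by (rule member_le_sum[OF nN]) auto
    qed
    also have "\<dots> \<le> G w"
      unfolding G_def
      by (rule member_le_sum[OF m]) (auto intro: sum_nonneg)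
    finally show ?thesis using True by simp
  qed
  have "measure_pmf.expectation Om (\<lambda>w. of_bool (Bad t w)) \<le> measure_pmf.expectation Om G"
    by (intro integral_mono pw) auto
  also have "\<dots> = (\<Sum>m\<in>{1..M}. \<Sum>n\<in>{1..N}. measure_pmf.expectation Om (\<lambda>w. of_bool (Ep n m w)) +
                      measure_pmf.expectation Om (\<lambda>w. of_bool (Em n m w)))"
    unfolding G_def by simp
  also have "\<dots> \<le> (\<Sum>m\<in>{1..M}. \<Sum>n\<in>{1..N}. 2 * (1 / (real t)\<^sup>2))"
  proof (intro sum_mono)
    fix m n assume m: "m \<in> {1..M}" and n: "n \<in> {1..N}"
    have "measure_pmf.expectation Om (\<lambda>w. of_bool (Ep n m w)) \<le> exp (- (2 * ln (real t)))"
      unfolding Ep_def by (rule markov_dev[OF t n m])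
    moreover have "measure_pmf.expectation Om (\<lambda>w. of_bool (Em n m w)) \<le> exp (- (2 * ln (real t)))"
      unfolding Em_def by (rule markov_dev[OF t n m])
    ultimately show "measure_pmf.expectation Om (\<lambda>w. of_bool (Ep n m w)) +
                      measure_pmf.expectation Om (\<lambda>w. of_bool (Em n m w)) \<le> 2 * (1 / (real t)\<^sup>2)"
      using exp_2ln[of t] t by simp
  qed
  also have "\<dots> = 2 * real N * real M / (real t)\<^sup>2" by simp
  finally show ?thesis .
qed

end

lemma cell_idx_bounds:
  assumes x: "0 \<le> x" "x \<le> 1" and h: "hh \<ge> 1"
  shows "real (cell_idx hh x) \<le> x * real hh" "x * real hh \<le> real (cell_idx hh x) + 1"
proof -
  have xh: "x * real hh \<ge> 0" using x by simp
  have fl: "real (nat \<lfloor>x * real hh\<rfloor>) \<le> x * real hh"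
    using xh by (simp add: of_nat_nat)
  show "real (cell_idx hh x) \<le> x * real hh"
    unfolding cell_idx_def using fl by (simp add: min_def)
  show "x * real hh \<le> real (cell_idx hh x) + 1"
  proof (cases "nat \<lfloor>x * real hh\<rfloor> \<le> hh - 1")
    case True
    then have "cell_idx hh x = nat \<lfloor>x * real hh\<rfloor>" by (simp add: cell_idx_def min_def)
    moreover have "x * real hh < real (nat \<lfloor>x * real hh\<rfloor>) + 1"
      using xh by (simp add: of_nat_nat)
    ultimately show ?thesis by simp
  next
    case False
    then have "cell_idx hh x = hh - 1" by (simp add: cell_idx_def min_def)
    moreover have "x * real hh \<le> real hh" using x h by (simp add: mult_left_le_one_le)
    ultimately show ?thesis using h by (simp add: of_nat_diff)
  qed
qed

lemma cell_idx_close: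
  assumes "0 \<le> x" "x \<le> 1" "0 \<le> x'" "x' \<le> 1" "hh \<ge> 1" "cell_idx hh x = cell_idx hh x'"
  shows "\<bar>x - x'\<bar> \<le> 1 / real hh"
proof -
  have "\<bar>x * real hh - x' * real hh\<bar> \<le> 1"
    using cell_idx_bounds[OF assms(1,2,5)] cell_idx_bounds[OF assms(3,4,5)] assms(6) by linarith
  then have "\<bar>x - x'\<bar> * real hh \<le> 1" by (simp add: left_diff_distrib[symmetric] abs_mult)
  then show ?thesis using assms(5) by (simp add: field_simps)
qed

lemma cell_close:
  assumes "\<phi> \<in> Phi" "\<phi>' \<in> Phi" "hh \<ge> 1" "cell hh \<phi> = cell hh \<phi>'"
  shows "dist \<phi> \<phi>' \<le> sqrt 2 / real hh"
proof -
  obtain a b where ab: "\<phi> = (a, b)" by (cases \<phi>)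
  obtain a' b' where ab': "\<phi>' = (a', b')" by (cases \<phi>')
  have r: "0 \<le> a" "a \<le> 1" "0 \<le> b" "b \<le> 1" "0 \<le> a'" "a' \<le> 1" "0 \<le> b'" "b' \<le> 1"
    using assms(1,2) by (auto simp: ab ab' Phi_def)
  have ci: "cell_idx hh a = cell_idx hh a'" "cell_idx hh b = cell_idx hh b'"
    using assms(4) by (auto simp: ab ab' cell_def)
  have da: "\<bar>a - a'\<bar> \<le> 1 / real hh" by (rule cell_idx_close) (use r ci assms(3) in auto)
  have db: "\<bar>b - b'\<bar> \<le> 1 / real hh" by (rule cell_idx_close) (use r ci assms(3) in auto)
  have "(a - a')\<^sup>2 \<le> (1 / real hh)\<^sup>2"
    using da by (metis abs_ge_zero power2_abs power_mono)
  moreover have "(b - b')\<^sup>2 \<le> (1 / real hh)\<^sup>2"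
    using db by (metis abs_ge_zero power2_abs power_mono)
  ultimately have "(a - a')\<^sup>2 + (b - b')\<^sup>2 \<le> 2 * (1 / real hh)\<^sup>2" by simp
  then have "sqrt ((a - a')\<^sup>2 + (b - b')\<^sup>2) \<le> sqrt (2 * (1 / real hh)\<^sup>2)"
    by (rule real_sqrt_le_mono)
  also have "\<dots> = sqrt 2 / real hh" by (simp add: real_sqrt_mult)
  finally show ?thesis by (simp add: ab ab' dist_Pair_Pair dist_real_def)
qed

context setting
begin

abbreviation "gam \<equiv> (2 * \<alpha> / (3 * \<alpha> + 2)) / (2 * \<alpha>)"

lemma gam_nonneg: "gam \<ge> 0" using \<alpha> by simp

lemma Tg_ge1: "real T powr gam \<ge> 1"
  using T gam_nonneg by (simp add: ge_one_powr_ge_zero)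

lemma h_ge: "real h \<ge> real T powr gam"
proof -
  have "real T powr gam \<le> of_int \<lceil>real T powr gam\<rceil>" by (rule le_of_int_ceiling)
  also have "\<dots> = real h" using Tg_ge1 by (simp add: of_nat_nat)
  finally show ?thesis .
qed

lemma h_ge1: "h \<ge> 1"
  using h_ge Tg_ge1 by linarith

lemma gam_alpha: "gam * \<alpha> = z / 2"
proof -
  have d1: "\<alpha> \<noteq> 0" using \<alpha> by simp
  have "gam * \<alpha> = z * (\<alpha> / (2 * \<alpha>))" by (simp only: times_divide_eq_right divide_divide_eq_left mult.commute)
  also have "\<alpha> / (2 * \<alpha>) = 1 / 2" using d1 by simp
  finally show ?thesis by simp
qed

lemma lip_bound: "(sqrt 2 / real h) powr \<alpha> \<le> 2 powr (\<alpha> / 2) * real T powr (- (z / 2))"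
proof -
  define X where "X = real T powr gam"
  have p1: "X > 0" using Tg_ge1 unfolding X_def by linarith
  have p2: "real h > 0" using h_ge1 by (intro of_nat_0_less_iff[THEN iffD2]) linarith
  have hX: "X \<le> real h" using h_ge by (simp add: X_def)
  have le1: "sqrt 2 / real h \<le> sqrt 2 / X"
    by (rule divide_left_mono[OF hX], simp, rule mult_pos_pos[OF p2 p1])
  have s1: "(sqrt 2 / real h) powr \<alpha> \<le> (sqrt 2 / X) powr \<alpha>"
  proof (rule powr_mono2)
    show "0 \<le> sqrt 2 / real h" by (rule divide_nonneg_nonneg[OF _ less_imp_le[OF p2]]) simp
  qed (use \<alpha> le1 in auto)
  have s2: "(sqrt 2 / X) powr \<alpha> = sqrt 2 powr \<alpha> / X powr \<alpha>"
    by (rule powr_divide)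
  have s3: "sqrt 2 powr \<alpha> = 2 powr (\<alpha> / 2)"
    by (simp add: powr_half_sqrt[symmetric] powr_powr)
  have s4: "X powr \<alpha> = real T powr (z / 2)"
    unfolding X_def by (simp only: powr_powr gam_alpha)
  have s5: "2 powr (\<alpha> / 2) / real T powr (z / 2) = 2 powr (\<alpha> / 2) * real T powr (- (z / 2))"
    by (simp only: powr_minus divide_inverse)
  show ?thesis using s1 unfolding s2 s3 s4 s5 .
qed

end

context setting
begin

abbreviation "Lip \<equiv> L * 2 powr (\<alpha> / 2) * real T powr (- (z / 2))"

lemma Lip_nonneg: "Lip \<ge> 0" using L by simp

lemma sel_sub_avail: "t \<in> {1..T} \<Longrightarrow> m \<in> {1..M} \<Longrightarrow> sel t w m \<subseteq> avail m t"
  using sel_feas[of t w] unfolding feasible_def by blast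

lemma p_close:
  assumes t: "t \<in> {1..T}" and t': "t' \<in> {1..T}" and m: "m \<in> {1..M}"
    and na: "n \<in> avail m t" and na': "n \<in> avail m t'"
    and cl: "cell h (ctx t' n m) = cell h (ctx t n m)"
  shows "\<bar>p n m (ctx t' n m) - p n m (ctx t n m)\<bar> \<le> Lip"
proof -
  have nN: "n \<in> {1..N}" using avail[OF m t] na by auto
  have P1: "ctx t' n m \<in> Phi" by (rule ctx[OF t' m na'])
  have P2: "ctx t n m \<in> Phi" by (rule ctx[OF t m na])
  have d: "dist (ctx t' n m) (ctx t n m) \<le> sqrt 2 / real h"
    by (rule cell_close[OF P1 P2 h_ge1 cl])
  have "dist (ctx t' n m) (ctx t n m) powr \<alpha> \<le> (sqrt 2 / real h) powr \<alpha>"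
    by (rule powr_mono2) (use \<alpha> d in auto)
  also have "\<dots> \<le> 2 powr (\<alpha> / 2) * real T powr (- (z / 2))" by (rule lip_bound)
  finally have "L * dist (ctx t' n m) (ctx t n m) powr \<alpha> \<le> L * (2 powr (\<alpha> / 2) * real T powr (- (z / 2)))"
    using L by (intro mult_left_mono) auto
  then show ?thesis using holder[OF nN m P1 P2] by (simp add: mult.assoc)
qed

lemma est_err:
  assumes t: "t \<in> {1..T}" and m: "m \<in> {1..M}" and na: "n \<in> avail m t"
    and k: "real (cnt sel ctx h t n m (cell h (ctx t n m)) w) > K t"
    and nb: "\<not> (\<bar>dev n m (cell h (ctx t n m)) t w\<bar> > Hf t * real (cnt sel ctx h t n m (cell h (ctx t n m)) w))"
  shows "\<bar>xhat sel ctx h t w n m - p n m (ctx t n m)\<bar> \<le> Hf t + Lip"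
proof -
  define l where "l = cell h (ctx t n m)"
  define S where "S = {t'\<in>{1..<t}. Ind n m l t' w}"
  define q where "q = p n m (ctx t n m)"
  define kk where "kk = real (card S)"
  have finS: "finite S" by (simp add: S_def)
  have kk_eq: "kk = real (cnt sel ctx h t n m l w)" by (simp only: kk_def S_def cnt_eq)
  have K0: "K t \<ge> 0" using t by simp
  have kpos: "kk > 0" using k K0 unfolding kk_eq l_def by linarith
  have dv: "\<bar>dev n m l t w\<bar> \<le> Hf t * kk" using nb unfolding kk_eq l_def by linarith
  have xh: "xhat sel ctx h t w n m = real (succ_cnt sel ctx h t n m l w) / kk"
    unfolding xhat_def phat_def kk_eq l_def ..
  have decomp: "xhat sel ctx h t w n m - q = dev n m l t w / kk + (\<Sum>t'\<in>S. p n m (ctx t' n m) - q) / kk"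
    using kpos unfolding xh dev_def S_def[symmetric] by (simp add: sum_subtractf kk_def field_simps)
  have each: "\<bar>p n m (ctx t' n m) - q\<bar> \<le> Lip" if "t' \<in> S" for t'
  proof -
    have t'T: "t' \<in> {1..T}" using that t by (auto simp: S_def)
    have ind: "Ind n m l t' w" using that by (simp add: S_def)
    have na': "n \<in> avail m t'" using ind sel_sub_avail[OF t'T m, of w] by (auto simp: Ind_def)
    have cl: "cell h (ctx t' n m) = cell h (ctx t n m)" using ind by (simp add: Ind_def l_def)
    show ?thesis unfolding q_def by (rule p_close[OF t t'T m na na' cl])
  qed
  have "\<bar>\<Sum>t'\<in>S. p n m (ctx t' n m) - q\<bar> \<le> (\<Sum>t'\<in>S. \<bar>p n m (ctx t' n m) - q\<bar>)"
    by (rule sum_abs)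
  also have "\<dots> \<le> (\<Sum>t'\<in>S. Lip)" by (intro sum_mono each)
  also have "\<dots> = kk * Lip" by (simp add: kk_def)
  finally have s2: "\<bar>\<Sum>t'\<in>S. p n m (ctx t' n m) - q\<bar> / kk \<le> Lip"
    using kpos by (simp add: field_simps)
  have s1: "\<bar>dev n m l t w\<bar> / kk \<le> Hf t" using dv kpos by (simp add: field_simps)
  have "\<bar>xhat sel ctx h t w n m - q\<bar> \<le> \<bar>dev n m l t w / kk\<bar> + \<bar>(\<Sum>t'\<in>S. p n m (ctx t' n m) - q) / kk\<bar>"
    unfolding decomp by (rule abs_triangle_ineq)
  also have "\<dots> = \<bar>dev n m l t w\<bar> / kk + \<bar>\<Sum>t'\<in>S. p n m (ctx t' n m) - q\<bar> / kk"
    using kpos by simp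
  also have "\<dots> \<le> Hf t + Lip" using s1 s2 by simp
  finally show ?thesis by (simp add: q_def)
qed

end

context setting
begin

definition Expl where
  "Expl t w \<longleftrightarrow> (\<exists>m\<in>{1..M}. \<exists>n\<in>sel t w m. (n, m) \<in> under_explored M avail sel ctx K h t w)"

lemma D_pos: "D > 0" using B cmin_pos by simp

lemma opt_feas: "t \<in> {1..T} \<Longrightarrow> feasible M B avail cost t (sopt t)"
  using opt by blast

lemma p_pair01:
  assumes "t \<in> {1..T}" "m \<in> {1..M}" "n \<in> avail m t"
  shows "0 \<le> p n m (ctx t n m)" "p n m (ctx t n m) \<le> 1"
proof -
  have nN: "n \<in> {1..N}" using avail[OF assms(2,1)] assms(3) by auto
  show "0 \<le> p n m (ctx t n m)" "p n m (ctx t n m) \<le> 1"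
    using p01[OF nN assms(2) ctx[OF assms]] by auto
qed

lemma round_bound:
  assumes t: "t \<in> {1..T}"
  shows "util M (sopt t) (\<lambda>n m. p n m (ctx t n m)) - util M (sel t w) (\<lambda>n m. p n m (ctx t n m))
         \<le> D * of_bool (Expl t w) + D * of_bool (Bad t w) + 2 * D * (Hf t + Lip)"
proof -
  define pt where "pt = (\<lambda>n m. p n m (ctx t n m))"
  define xh where "xh = xhat sel ctx h t w"
  define U where "U = under_explored M avail sel ctx K h t w"
  have Eps0: "Hf t + Lip \<ge> 0" using Lip_nonneg by simp
  have feo: "feasible M B avail cost t (sopt t)" by (rule opt_feas[OF t])
  have fes: "feasible M B avail cost t (sel t w)" by (rule sel_feas[OF t])
  have sub_o: "sopt t m \<subseteq> avail m t" if "m \<in> {1..M}" for m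
    using feo that unfolding feasible_def by blast
  have sub_s: "sel t w m \<subseteq> avail m t" if "m \<in> {1..M}" for m
    using fes that unfolding feasible_def by blast
  have uo: "util M (sopt t) pt \<le> D"
    by (rule util_le_D[OF feo t]) (unfold pt_def, meson sub_o p_pair01(2)[OF t] subsetD)
  have us: "util M (sel t w) pt \<ge> 0"
    by (rule util_nonneg) (unfold pt_def, meson sub_s p_pair01(1)[OF t] subsetD)
  show ?thesis
  proof (cases "Expl t w \<or> Bad t w")
    case True
    then have "D \<le> D * of_bool (Expl t w) + D * of_bool (Bad t w)"
      using D_pos by auto
    moreover have "0 \<le> 2 * D * (Hf t + Lip)"
    proof -
      have "0 \<le> 2 * D" using D_pos by linarith
      then show ?thesis using Eps0 by (rule mult_nonneg_nonneg)
    qed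
    ultimately show ?thesis using uo us unfolding pt_def by linarith
  next
    case False
    then have nE: "\<not> Expl t w" and nB: "\<not> Bad t w" by auto
    have sel_nU: "(n, m) \<notin> U" if "m \<in> {1..M}" "n \<in> sel t w m" for n m
      using nE that unfolding Expl_def U_def by blast
    have AB: "util M (sopt t) xh \<le> util M (sel t w) xh \<and> (\<forall>m\<in>{1..M}. \<forall>n\<in>sopt t m. (n, m) \<notin> U)"
    proof (cases "U = {}")
      case True
      have ch: "\<forall>s'. feasible M B avail cost t s' \<longrightarrow> util M s' xh \<le> util M (sel t w) xh"
        using sel_choice[OF t, of w] True unfolding cocs_choice_def Let_def U_def xh_def by auto
      show ?thesis using ch feo True by auto
    next
      case False
      have ch: "(\<forall>s'. feasible M B avail cost t s' \<longrightarrow> num_ue M U s' \<le> num_ue M U (sel t w)) \<and>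
           (\<forall>s'. feasible M B avail cost t s' \<and> (\<forall>m\<in>{1..M}. {n\<in>s' m. (n, m) \<in> U} = {n\<in>sel t w m. (n, m) \<in> U})
                 \<longrightarrow> util M s' xh \<le> util M (sel t w) xh)"
        using sel_choice[OF t, of w] False unfolding cocs_choice_def Let_def U_def xh_def by auto
      have "{(n, m). m \<in> {1..M} \<and> n \<in> sel t w m \<and> (n, m) \<in> U} = {}"
        using sel_nU by auto
      then have "num_ue M U (sel t w) = 0" unfolding num_ue_def by (simp only: card.empty)
      then have "num_ue M U (sopt t) = 0" using ch feo by fastforce
      moreover have "finite {(n, m). m \<in> {1..M} \<and> n \<in> sopt t m \<and> (n, m) \<in> U}"
      proof (rule finite_subset)
        show "{(n, m). m \<in> {1..M} \<and> n \<in> sopt t m \<and> (n, m) \<in> U} \<subseteq> {1..N} \<times> {1..M}"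
          using feas_sub[OF feo t] by auto
      qed auto
      ultimately have empt: "{(n, m). m \<in> {1..M} \<and> n \<in> sopt t m \<and> (n, m) \<in> U} = {}"
        by (simp add: num_ue_def)
      then have oB: "\<forall>m\<in>{1..M}. \<forall>n\<in>sopt t m. (n, m) \<notin> U" by blast
      have "\<forall>m\<in>{1..M}. {n\<in>sopt t m. (n, m) \<in> U} = {n\<in>sel t w m. (n, m) \<in> U}"
        using oB sel_nU by auto
      then have "util M (sopt t) xh \<le> util M (sel t w) xh" using ch feo by blast
      then show ?thesis using oB by blast
    qed
    have close: "\<bar>xh n m - pt n m\<bar> \<le> Hf t + Lip"
      if m: "m \<in> {1..M}" and na: "n \<in> avail m t" and nU: "(n, m) \<notin> U" for n m
    proof -
      have k: "real (cnt sel ctx h t n m (cell h (ctx t n m)) w) > K t"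
        using nU m na unfolding U_def under_explored_def by auto
      have nb: "\<not> (\<bar>dev n m (cell h (ctx t n m)) t w\<bar> > Hf t * real (cnt sel ctx h t n m (cell h (ctx t n m)) w))"
        using nB m na k unfolding Bad_def by blast
      show ?thesis unfolding xh_def pt_def by (rule est_err[OF t m na k nb])
    qed
    have d1: "util M (sopt t) pt - util M (sopt t) xh \<le> D * (Hf t + Lip)"
    proof (rule util_diff_le[OF feo t Eps0])
      fix m n assume m: "m \<in> {1..M}" and n: "n \<in> sopt t m"
      have "\<bar>xh n m - pt n m\<bar> \<le> Hf t + Lip"
        using close[OF m] sub_o[OF m] n AB m by blast
      then show "pt n m - xh n m \<le> Hf t + Lip" by linarith
    qed
    have d2: "util M (sel t w) xh - util M (sel t w) pt \<le> D * (Hf t + Lip)"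
    proof (rule util_diff_le[OF fes t Eps0])
      fix m n assume m: "m \<in> {1..M}" and n: "n \<in> sel t w m"
      have "\<bar>xh n m - pt n m\<bar> \<le> Hf t + Lip"
        using close[OF m] sub_s[OF m] n sel_nU[OF m] by blast
      then show "xh n m - pt n m \<le> Hf t + Lip" by linarith
    qed
    have "0 \<le> D * of_bool (Expl t w) + D * of_bool (Bad t w)"
      using D_pos by (intro add_nonneg_nonneg mult_nonneg_nonneg) auto
    then show ?thesis using d1 d2 AB unfolding pt_def by linarith
  qed
qed

end

context setting
begin

lemma K_mono: "1 \<le> t \<Longrightarrow> t \<le> T \<Longrightarrow> K t \<le> K T"
proof -
  assume t: "1 \<le> t" "t \<le> T"
  have z0: "z \<ge> 0" using z_pos by simp
  have a: "real t powr z \<le> real T powr z" using t z0 by (intro powr_mono2) auto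
  have b: "ln (real t) \<le> ln (real T)" using t by simp
  have c: "0 \<le> ln (real t)" using t by simp
  show "K t \<le> K T" by (rule mult_mono[OF a b]) (use c in auto)
qed

lemma cell_idx_lt: "hh \<ge> 1 \<Longrightarrow> cell_idx hh x < hh"
  unfolding cell_idx_def by linarith

lemma expl_count: "card {t\<in>{1..T}. Expl t w} \<le> N * M * (h * h) * (nat \<lfloor>K T\<rfloor> + 1)"
proof -
  obtain hh where hh: "h = hh" by blast
  have hh1: "hh \<ge> 1" using h_ge1 unfolding hh .
  note cnt_eq' = cnt_eq[unfolded hh]
  note Ind_def' = Ind_def[unfolded hh]
  define A where "A = {t\<in>{1..T}. Expl t w}"
  define Pr where "Pr = (\<lambda>t nm. snd nm \<in> {1..M} \<and> fst nm \<in> sel t w (snd nm) \<and>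
        snd nm \<in> {1..M} \<and> fst nm \<in> avail (snd nm) t \<and> real (cnt sel ctx hh t (fst nm) (snd nm) (cell hh (ctx t (fst nm) (snd nm))) w) \<le> K t)"
  define f where "f = (\<lambda>t. SOME nm. Pr t nm)"
  have fP: "Pr t (f t)" if "t \<in> A" for t
  proof -
    from that obtain m n where "m \<in> {1..M}" "n \<in> sel t w m" "(n, m) \<in> under_explored M avail sel ctx K hh t w"
      unfolding A_def Expl_def hh by blast
    then have "Pr t (n, m)" unfolding Pr_def under_explored_def fst_conv snd_conv by blast
    then show ?thesis unfolding f_def by (rule someI)
  qed
  define g where "g = (\<lambda>t. (fst (f t), snd (f t), cell hh (ctx t (fst (f t)) (snd (f t))),
                      cnt sel ctx hh t (fst (f t)) (snd (f t)) (cell hh (ctx t (fst (f t)) (snd (f t)))) w))"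
  define Tgt where "Tgt = {1..N} \<times> {1..M} \<times> ({0..<hh} \<times> {0..<hh}) \<times> {0..nat \<lfloor>K T\<rfloor>}"
  have lt: False if t12: "t1 \<in> A" "t2 \<in> A" "t1 < t2" "g t1 = g t2" for t1 t2
  proof -
    obtain n m where nm: "f t1 = (n, m)" by (cases "f t1")
    obtain n2 m2 where nm2: "f t2 = (n2, m2)" by (cases "f t2")
    have eqg: "(n, m, cell hh (ctx t1 n m), cnt sel ctx hh t1 n m (cell hh (ctx t1 n m)) w) =
               (n2, m2, cell hh (ctx t2 n2 m2), cnt sel ctx hh t2 n2 m2 (cell hh (ctx t2 n2 m2)) w)"
      using t12(4) unfolding g_def nm nm2 by (simp only: fst_conv snd_conv)
    have e1: "n2 = n" "m2 = m" using eqg[unfolded prod.inject] by auto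
    define l where "l = cell hh (ctx t1 n m)"
    have l2': "cell hh (ctx t1 n m) = cell hh (ctx t2 n m)" using eqg[unfolded prod.inject e1] by (elim conjE)
    have c0: "cnt sel ctx hh t1 n m (cell hh (ctx t1 n m)) w = cnt sel ctx hh t2 n m (cell hh (ctx t2 n m)) w"
      using eqg[unfolded prod.inject e1] by (elim conjE)
    have c12: "cnt sel ctx hh t1 n m l w = cnt sel ctx hh t2 n m l w"
      unfolding l_def using c0 l2' by (simp only:)
    have P1: "Pr t1 (n, m)" using fP[OF t12(1)] unfolding nm .
    have t1b: "t1 \<ge> 1" using t12(1) by (simp add: A_def)
    have ind1: "Ind n m l t1 w" using P1 unfolding Pr_def Ind_def' l_def fst_conv snd_conv by blast
    have sub: "{t'\<in>{1..<t1}. Ind n m l t' w} \<subset> {t'\<in>{1..<t2}. Ind n m l t' w}"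
    proof
      show "{t'\<in>{1..<t1}. Ind n m l t' w} \<subseteq> {t'\<in>{1..<t2}. Ind n m l t' w}" using t12(3) by auto
      show "{t'\<in>{1..<t1}. Ind n m l t' w} \<noteq> {t'\<in>{1..<t2}. Ind n m l t' w}"
        using ind1 t1b t12(3) by auto
    qed
    have lt: "card {t'\<in>{1..<t1}. Ind n m l t' w} < card {t'\<in>{1..<t2}. Ind n m l t' w}"
      by (rule psubset_card_mono) (use sub in auto)
    have "card {t'\<in>{1..<t1}. Ind n m l t' w} = card {t'\<in>{1..<t2}. Ind n m l t' w}"
      using c12 by (simp only: cnt_eq')
    then show False using lt by linarith
  qed
  have inj: "inj_on g A"
  proof (rule inj_onI)
    fix t1 t2 assume "t1 \<in> A" "t2 \<in> A" "g t1 = g t2"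
    then show "t1 = t2" using lt[of t1 t2] lt[of t2 t1] by (metis linorder_neqE_nat)
  qed
  have img: "g ` A \<subseteq> Tgt"
  proof
    fix x assume "x \<in> g ` A"
    then obtain t where tA: "t \<in> A" and x: "x = g t" by blast
    obtain n m where nm: "f t = (n, m)" by (cases "f t")
    have P: "Pr t (n, m)" using fP[OF tA] unfolding nm .
    have tT: "t \<in> {1..T}" using tA by (simp add: A_def)
    have m: "m \<in> {1..M}" and ns: "n \<in> sel t w m"
      and ue: "real (cnt sel ctx hh t n m (cell hh (ctx t n m)) w) \<le> K t"
      using P unfolding Pr_def fst_conv snd_conv by blast+
    have nN: "n \<in> {1..N}" using sel_sub_avail[OF tT m, of w] avail[OF m tT] ns by auto
    have "K t \<le> K T" using tT by (intro K_mono) auto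
    with ue have "real (cnt sel ctx hh t n m (cell hh (ctx t n m)) w) \<le> K T" by linarith
    then have cb: "cnt sel ctx hh t n m (cell hh (ctx t n m)) w \<in> {0..nat \<lfloor>K T\<rfloor>}"
      by (simp add: le_nat_iff le_floor_iff)
    have cl: "cell hh (ctx t n m) \<in> {0..<hh} \<times> {0..<hh}"
      using cell_idx_lt[OF hh1] by (simp add: cell_def)
    show "x \<in> Tgt" unfolding x Tgt_def g_def nm fst_conv snd_conv using nN m cl cb by blast
  qed
  have "card A \<le> card Tgt"
    by (rule card_inj_on_le[OF inj img]) (simp add: Tgt_def)
  also have "card Tgt = N * M * (hh * hh) * (nat \<lfloor>K T\<rfloor> + 1)"
    unfolding Tgt_def card_cartesian_product card_atLeastAtMost card_atLeastLessThan by (simp add: algebra_simps)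
  finally show ?thesis unfolding A_def hh .
qed

end

context setting
begin

abbreviation "ee \<equiv> (2 * \<alpha> + 2) / (3 * \<alpha> + 2)"
abbreviation "ff \<equiv> 2 / (3 * \<alpha> + 2)"

lemma ee_facts: "0 < ee" "ee \<le> 1" "1 - z / 2 = ee" "ff + z = ee" "gam + gam = ff"
proof -
  have d: "3 * \<alpha> + 2 > 0" using \<alpha> by simp
  have an: "\<alpha> \<noteq> 0" using \<alpha> by simp
  show "0 < ee" using \<alpha> by simp
  show "ee \<le> 1" using d \<alpha> by (simp add: field_simps)
  show "1 - z / 2 = ee" using d by (simp add: field_simps)
  show "ff + z = ee" unfolding add_divide_distrib[symmetric] by (simp add: add.commute)
  have d3: "\<alpha> * 4 + \<alpha> * (\<alpha> * 6) > 0" using \<alpha> by (intro add_pos_pos mult_pos_pos) auto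
  have "gam = 1 / (3 * \<alpha> + 2)" using d an d3 by (simp add: field_simps)
  then show "gam + gam = ff" by simp
qed

lemma opt_past: "past_dep t (\<lambda>w. sopt t)"
  by (simp add: past_dep_def)

definition Dl where "Dl t w = util M (sopt t) (\<lambda>n m. p n m (ctx t n m)) - util M (sel t w) (\<lambda>n m. p n m (ctx t n m))"

lemma regret_eq: "exp_regret T M Om sopt sel = (\<Sum>t=1..T. measure_pmf.expectation Om (Dl t))"
  unfolding exp_regret_def
proof (rule sum.cong[OF refl])
  fix t assume t: "t \<in> {1..T}"
  have a: "measure_pmf.expectation Om (\<lambda>w. util M (sopt t) (Xof w t)) =
           measure_pmf.expectation Om (\<lambda>w. util M (sopt t) (\<lambda>n m. p n m (ctx t n m)))"
    by (rule indep_util[OF t opt_past opt_feas[OF t]])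
  have b: "measure_pmf.expectation Om (\<lambda>w. util M (sel t w) (Xof w t)) =
           measure_pmf.expectation Om (\<lambda>w. util M (sel t w) (\<lambda>n m. p n m (ctx t n m)))"
    by (rule indep_util[OF t sel_past[OF t] sel_feas[OF t]])
  show "measure_pmf.expectation Om (\<lambda>w. util M (sopt t) (Xof w t)) -
        measure_pmf.expectation Om (\<lambda>w. util M (sel t w) (Xof w t)) =
        measure_pmf.expectation Om (Dl t)"
    unfolding a b Dl_def by (rule Bochner_Integration.integral_diff[symmetric]) auto
qed

lemma regret_le:
  "exp_regret T M Om sopt sel \<le>
     D * real (N * M * (h * h) * (nat \<lfloor>K T\<rfloor> + 1)) + D * (\<Sum>t=1..T. 2 * real N * real M / (real t)\<^sup>2)
     + 2 * D * (\<Sum>t=1..T. Hf t + Lip)"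
proof -
  obtain DD where DD: "D = DD" by blast
  obtain CC where CC: "real (N * M * (h * h) * (nat \<lfloor>K T\<rfloor> + 1)) = CC" by blast
  obtain EE where EE: "EE = (\<lambda>t. Hf t + Lip)" by blast
  obtain BB where BB: "BB = (\<lambda>t::nat. 2 * real N * real M / (real t)\<^sup>2)" by blast
  have Dp: "DD \<ge> 0" using D_pos unfolding DD by linarith
  have rb: "Dl t w \<le> DD * of_bool (Expl t w) + DD * of_bool (Bad t w) + 2 * DD * EE t"
    if t: "t \<in> {1..T}" for t w
    using round_bound[OF t, of w] unfolding Dl_def DD EE by (simp only:)
  have bb: "measure_pmf.expectation Om (\<lambda>w. of_bool (Bad t w)) \<le> BB t" if t: "t \<in> {1..T}" for t
    using Bad_exp[OF t] unfolding BB by (simp only:)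
  have cnt_le: "real (card {t\<in>{1..T}. Expl t w}) \<le> CC" for w
    using expl_count[of w] unfolding CC[symmetric] by (simp only: of_nat_le_iff)
  have step: "measure_pmf.expectation Om (Dl t) \<le>
        DD * measure_pmf.expectation Om (\<lambda>w. of_bool (Expl t w)) + DD * BB t + 2 * DD * EE t"
    if t: "t \<in> {1..T}" for t
  proof -
    have "measure_pmf.expectation Om (Dl t) \<le>
          measure_pmf.expectation Om (\<lambda>w. DD * of_bool (Expl t w) + DD * of_bool (Bad t w) + 2 * DD * EE t)"
      by (rule integral_mono) (rule int_Om, rule int_Om, rule rb[OF t])
    also have "\<dots> = DD * measure_pmf.expectation Om (\<lambda>w. of_bool (Expl t w)) +
                    DD * measure_pmf.expectation Om (\<lambda>w. of_bool (Bad t w)) + 2 * DD * EE t"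
      by simp
    also have "\<dots> \<le> DD * measure_pmf.expectation Om (\<lambda>w. of_bool (Expl t w)) + DD * BB t + 2 * DD * EE t"
      using bb[OF t] Dp by (intro add_mono mult_left_mono order.refl)
    finally show ?thesis .
  qed
  have ex: "(\<Sum>t=1..T. measure_pmf.expectation Om (\<lambda>w. of_bool (Expl t w) :: real)) \<le> CC"
  proof -
    have "(\<Sum>t=1..T. measure_pmf.expectation Om (\<lambda>w. of_bool (Expl t w) :: real)) =
          measure_pmf.expectation Om (\<lambda>w. \<Sum>t=1..T. of_bool (Expl t w) :: real)"
      by (rule Bochner_Integration.integral_sum[symmetric]) (rule int_Om)
    also have "\<dots> = measure_pmf.expectation Om (\<lambda>w. real (card ({1..T} \<inter> {t. Expl t w})))"
      by (intro Bochner_Integration.integral_cong refl sum_of_bool_eq finite_atLeastAtMost)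
    also have "\<dots> \<le> measure_pmf.expectation Om (\<lambda>w. CC)"
    proof (rule integral_mono)
      fix w
      have "{1..T} \<inter> {t. Expl t w} = {t\<in>{1..T}. Expl t w}" by blast
      then show "real (card ({1..T} \<inter> {t. Expl t w})) \<le> CC" using cnt_le[of w] by (simp only:)
    qed (rule int_Om)+
    also have "\<dots> = CC" by simp
    finally show ?thesis .
  qed
  have "exp_regret T M Om sopt sel \<le> (\<Sum>t=1..T. DD * measure_pmf.expectation Om (\<lambda>w. of_bool (Expl t w)) + DD * BB t + 2 * DD * EE t)"
    unfolding regret_eq by (rule sum_mono) (rule step)
  also have "\<dots> = DD * (\<Sum>t=1..T. measure_pmf.expectation Om (\<lambda>w. of_bool (Expl t w)))
                 + DD * (\<Sum>t=1..T. BB t) + 2 * DD * (\<Sum>t=1..T. EE t)"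
    by (simp only: sum.distrib sum_distrib_left)
  also have "\<dots> \<le> DD * CC + DD * (\<Sum>t=1..T. BB t) + 2 * DD * (\<Sum>t=1..T. EE t)"
    using ex Dp by (intro add_mono mult_left_mono order.refl)
  finally show ?thesis unfolding DD CC BB EE .
qed

end

context setting
begin

lemma h_le: "real h \<le> 2 * real T powr gam"
proof -
  have "real h = of_int \<lceil>real T powr gam\<rceil>" using Tg_ge1 by (simp add: of_nat_nat)
  also have "\<dots> \<le> real T powr gam + 1" by linarith
  also have "\<dots> \<le> 2 * real T powr gam" using Tg_ge1 by linarith
  finally show ?thesis .
qed

lemma hh_le: "real (h * h) \<le> 4 * real T powr ff"
proof -
  have "real (h * h) = real h * real h" by simp
  also have "\<dots> \<le> (2 * real T powr gam) * (2 * real T powr gam)"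
    by (rule mult_mono[OF h_le h_le], use Tg_ge1 in linarith, rule of_nat_0_le_iff)
  also have "\<dots> = 4 * (real T powr gam * real T powr gam)" by simp
  also have "real T powr gam * real T powr gam = real T powr (gam + gam)" by (simp only: powr_add)
  also have "gam + gam = ff" by (rule ee_facts(5))
  finally show ?thesis .
qed

lemma CC_le: "real (N * M * (h * h) * (nat \<lfloor>K T\<rfloor> + 1)) \<le>
     real N * real M * (4 * (ln (real T) * real T powr ee + real T powr ff))"
proof -
  have KT0: "K T \<ge> 0" using T by simp
  have k1: "real (nat \<lfloor>K T\<rfloor> + 1) \<le> K T + 1" using KT0 by simp
  have "real (N * M * (h * h) * (nat \<lfloor>K T\<rfloor> + 1)) = real N * real M * (real (h * h) * real (nat \<lfloor>K T\<rfloor> + 1))"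
    by (simp only: of_nat_mult mult.assoc)
  also have "real (h * h) * real (nat \<lfloor>K T\<rfloor> + 1) \<le> (4 * real T powr ff) * (K T + 1)"
    using hh_le k1 KT0 by (intro mult_mono) auto
  also have "(4 * real T powr ff) * (K T + 1) = 4 * ((real T powr ff * real T powr z) * ln (real T) + real T powr ff)"
    by (simp add: algebra_simps)
  also have "real T powr ff * real T powr z = real T powr ee"
    by (simp only: powr_add[symmetric] ee_facts(4))
  finally show ?thesis using N M by (simp add: mult_left_mono mult.commute)
qed

lemma EE_le: "(\<Sum>t=1..T. Hf t + Lip) \<le> real T powr ee / ee + L * 2 powr (\<alpha> / 2) * real T powr ee"
proof -
  obtain zz where zz: "z = zz" by blast
  have z2a: "0 \<le> z / 2" using z_pos unfolding zz by linarith
  have z2b: "z / 2 < 1" using z_lt1 unfolding zz by linarith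
  note z2 = z2a z2b
  have "(\<Sum>t=1..T. Hf t + Lip) = (\<Sum>t=1..T. Hf t) + real T * Lip"
    by (simp add: sum.distrib)
  also have "(\<Sum>t=1..T. Hf t) \<le> real T powr ee / ee"
    using sum_powr_le[OF z2 T] unfolding ee_facts(3) .
  also have "real T * Lip = L * 2 powr (\<alpha> / 2) * (real T powr 1 * real T powr (- (z / 2)))"
    using T by simp
  also have "real T powr 1 * real T powr (- (z / 2)) = real T powr ee"
    by (simp only: powr_add[symmetric] diff_conv_add_uminus[symmetric] ee_facts(3))
  finally show ?thesis by simp
qed

lemma BB_le: "(\<Sum>t=1..T. 2 * real N * real M / (real t)\<^sup>2) \<le> real N * real M * (pi\<^sup>2 / 3)"
proof -
  have "(\<Sum>t=1..T. 2 * real N * real M / (real t)\<^sup>2) = 2 * real N * real M * (\<Sum>t=1..T. 1 / (real t)\<^sup>2)"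
    by (simp add: sum_distrib_left)
  also have "\<dots> \<le> 2 * real N * real M * (pi\<^sup>2 / 6)"
    by (intro mult_left_mono sum_inverse_squares_le) auto
  finally show ?thesis by (simp add: algebra_simps)
qed

end

lemma final_ineq:
  fixes R n mm B cm X lT Te Tf e L S2 Sb P CC BBs EEs :: real
  assumes cm: "cm > 0" and D1: "B / cm \<ge> 1" and n: "n \<ge> 1" and mm: "mm \<ge> 1"
    and X: "X = lT * Te + Tf" "X \<ge> 0" and Te: "Te \<ge> 0" and e: "0 < e" "e \<le> 1"
    and L: "L > 0" and S2: "S2 > 0" and Sb: "Sb \<ge> 1" and P: "P \<ge> 0"
    and R: "R \<le> B / cm * CC + B / cm * BBs + 2 * (B / cm) * EEs"
    and CC: "CC \<le> n * mm * (4 * X)" and BBs: "BBs \<le> n * mm * P" and EEs: "EEs \<le> Te / e + L * S2 * Te"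
  shows "R \<le> 4 * n ^ 2 * mm * B / cm * X + n * mm * B / cm * Sb * P
              + (3 * L * S2 + (2 + 2 * L * S2) / e) * n * mm * B / cm * Te"
proof -
  define D where "D = B / cm"
  have D0: "D \<ge> 1" using D1 by (simp add: D_def)
  have nmm: "n * mm \<ge> 1" using n mm by (metis mult_mono' mult_1 zero_le_one order_trans)
  have a: "D * CC \<le> 4 * n ^ 2 * mm * B / cm * X"
  proof -
    have "D * CC \<le> D * (n * mm * (4 * X))" using CC D0 by (intro mult_left_mono) auto
    also have "\<dots> = (4 * mm * D * X) * n" by (simp add: algebra_simps)
    also have "\<dots> \<le> (4 * mm * D * X) * n ^ 2"
    proof (rule mult_left_mono)
      show "n \<le> n ^ 2" using n by (simp add: power2_eq_square)
      show "0 \<le> 4 * mm * D * X" using mm D0 X by simp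
    qed
    also have "\<dots> = 4 * n ^ 2 * mm * B / cm * X" by (simp add: D_def)
    finally show ?thesis .
  qed
  have b: "D * BBs \<le> n * mm * B / cm * Sb * P"
  proof -
    have "D * BBs \<le> D * (n * mm * P)" using BBs D0 by (intro mult_left_mono) auto
    also have "\<dots> = (D * n * mm * P) * 1" by simp
    also have "\<dots> \<le> (D * n * mm * P) * Sb"
      using Sb D0 n mm P by (intro mult_left_mono) auto
    also have "\<dots> = n * mm * B / cm * Sb * P" by (simp add: D_def)
    finally show ?thesis .
  qed
  have c: "2 * D * EEs \<le> (3 * L * S2 + (2 + 2 * L * S2) / e) * n * mm * B / cm * Te"
  proof -
    have "2 * D * EEs \<le> 2 * D * (Te / e + L * S2 * Te)" using EEs D0 by (intro mult_left_mono) auto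
    also have "\<dots> = (2 / e + 2 * L * S2) * (D * Te)" by (simp add: algebra_simps)
    also have "\<dots> \<le> (3 * L * S2 + (2 + 2 * L * S2) / e) * (D * Te)"
    proof (rule mult_right_mono)
      have "2 * L * S2 \<le> 2 * L * S2 / e" using e L S2 by (simp add: field_simps)
      moreover have "0 \<le> 3 * L * S2" using L S2 by simp
      ultimately show "2 / e + 2 * L * S2 \<le> 3 * L * S2 + (2 + 2 * L * S2) / e"
        by (simp add: add_divide_distrib)
      show "0 \<le> D * Te" using D0 Te by simp
    qed
    also have "\<dots> = (3 * L * S2 + (2 + 2 * L * S2) / e) * (D * Te) * 1" by simp
    also have "\<dots> \<le> (3 * L * S2 + (2 + 2 * L * S2) / e) * (D * Te) * (n * mm)"
    proof (rule mult_left_mono[OF nmm])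
      have "0 \<le> (2 + 2 * L * S2) / e" using e L S2 by simp
      then show "0 \<le> (3 * L * S2 + (2 + 2 * L * S2) / e) * (D * Te)"
        using L S2 D0 Te by simp
    qed
    also have "\<dots> = (3 * L * S2 + (2 + 2 * L * S2) / e) * n * mm * B / cm * Te"
      by (simp add: D_def)
    finally show ?thesis .
  qed
  show ?thesis using R a b c unfolding D_def by linarith
qed

context setting
begin

lemma smallD:
  assumes D1: "D < 1"
  shows "exp_regret T M Om sopt sel \<le> 0"
proof -
  have empt: "sopt t m = {}" if t: "t \<in> {1..T}" and m: "m \<in> {1..M}" for t m
  proof -
    have "real (card (sopt t m)) \<le> D" by (rule feas_card[OF opt_feas[OF t] t m])
    then have "card (sopt t m) = 0" using D1 by linarith
    then show ?thesis using feas_fin[OF opt_feas[OF t] t m] by simp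
  qed
  have "measure_pmf.expectation Om (Dl t) \<le> measure_pmf.expectation Om (\<lambda>w. 0)" if t: "t \<in> {1..T}" for t
  proof (rule integral_mono)
    fix w
    have "util M (sopt t) (\<lambda>n m. p n m (ctx t n m)) = 0"
      unfolding util_def using empt[OF t] by simp
    moreover have "util M (sel t w) (\<lambda>n m. p n m (ctx t n m)) \<ge> 0"
    proof (rule util_nonneg)
      fix m n assume m: "m \<in> {1..M}" and n: "n \<in> sel t w m"
      show "0 \<le> p n m (ctx t n m)" using p_pair01(1)[OF t m] sel_sub_avail[OF t m, of w] n by blast
    qed
    ultimately show "Dl t w \<le> 0" unfolding Dl_def by linarith
  qed (rule int_Om)+
  then have le0: "measure_pmf.expectation Om (Dl t) \<le> 0" if "t \<in> {1..T}" for t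
    using that by simp
  show ?thesis unfolding regret_eq by (rule sum_nonpos) (rule le0)
qed

end

lemma rhs_nonneg:
  fixes n mm B cm X Te e L S2 Sb P :: real
  assumes "cm > 0" "B > 0" "n \<ge> 0" "mm \<ge> 0" "X \<ge> 0" "Te \<ge> 0" "e > 0" "L > 0" "S2 > 0" "Sb \<ge> 0" "P \<ge> 0"
  shows "0 \<le> 4 * n ^ 2 * mm * B / cm * X + n * mm * B / cm * Sb * P
              + (3 * L * S2 + (2 + 2 * L * S2) / e) * n * mm * B / cm * Te"
  using assms by (intro add_nonneg_nonneg mult_nonneg_nonneg divide_nonneg_pos) auto

context setting
begin

lemma main:
  "let cmin = Min {c n (y n t) | n t. n \<in> {1..N} \<and> t \<in> {1..T}};
             e = (2 * \<alpha> + 2) / (3 * \<alpha> + 2)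
         in exp_regret T M (outcomes T N M p ctx) sopt sel
            \<le> 4 * real N ^ 2 * real M * B / cmin
                 * (ln (real T) * real T powr e + real T powr (2 / (3 * \<alpha> + 2)))
              + real N * real M * B / cmin
                 * (\<Sum>k = 1..nat \<lfloor>B / cmin\<rfloor>. real (N choose k)) * (pi ^ 2 / 3)
              + (3 * L * 2 powr (\<alpha> / 2) + (2 + 2 * L * 2 powr (\<alpha> / 2)) / e)
                 * real N * real M * B / cmin * real T powr e"
proof -
  obtain cm where cm: "Min {c n (y n t) | n t. n \<in> {1..N} \<and> t \<in> {1..T}} = cm" by blast
  have cmp: "cm > 0" using cmin_pos unfolding cm .
  have Xnn: "ln (real T) * real T powr ee + real T powr ff \<ge> 0" using T by simp
  have Tenn: "real T powr ee \<ge> 0" by simp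
  have S2: "2 powr (\<alpha> / 2) > (0::real)" by simp
  have Pnn: "pi ^ 2 / 3 \<ge> (0::real)" by simp
  have Sbnn: "(\<Sum>k = 1..nat \<lfloor>B / cm\<rfloor>. real (N choose k)) \<ge> 0" by (rule sum_nonneg) simp
  show ?thesis
  proof (cases "B / cm < 1")
    case True
    have "exp_regret T M Om sopt sel \<le> 0" using smallD True unfolding cm by blast
    also have "0 \<le> 4 * real N ^ 2 * real M * B / cm * (ln (real T) * real T powr ee + real T powr ff)
              + real N * real M * B / cm * (\<Sum>k = 1..nat \<lfloor>B / cm\<rfloor>. real (N choose k)) * (pi ^ 2 / 3)
              + (3 * L * 2 powr (\<alpha> / 2) + (2 + 2 * L * 2 powr (\<alpha> / 2)) / ee)
                 * real N * real M * B / cm * real T powr ee"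
      by (rule rhs_nonneg[OF cmp B _ _ Xnn Tenn ee_facts(1) L S2 Sbnn Pnn]) auto
    finally show ?thesis unfolding Let_def cm .
  next
    case False
    then have D1: "B / cm \<ge> 1" by simp
    have Sb1: "(\<Sum>k = 1..nat \<lfloor>B / cm\<rfloor>. real (N choose k)) \<ge> 1"
    proof -
      have one: "1 \<in> {1..nat \<lfloor>B / cm\<rfloor>}" using D1 by (simp add: le_nat_iff le_floor_iff)
      have "real (N choose 1) \<le> (\<Sum>k = 1..nat \<lfloor>B / cm\<rfloor>. real (N choose k))"
        by (rule member_le_sum[OF one]) auto
      then show ?thesis using N by simp
    qed
    have n1: "real N \<ge> 1" and m1: "real M \<ge> 1" using N M by auto
    have RL: "exp_regret T M Om sopt sel \<le>
       B / cm * real (N * M * (h * h) * (nat \<lfloor>K T\<rfloor> + 1)) + B / cm * (\<Sum>t=1..T. 2 * real N * real M / (real t)\<^sup>2)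
       + 2 * (B / cm) * (\<Sum>t=1..T. Hf t + Lip)"
      using regret_le unfolding cm .
    show ?thesis unfolding Let_def cm
      by (rule final_ineq[OF cmp D1 n1 m1 refl Xnn Tenn ee_facts(1,2) L S2 Sb1 Pnn RL CC_le BB_le EE_le])
  qed
qed

end

theorem theorem2:
  fixes N M T :: nat and B L \<alpha> :: real
    and avail :: "nat \<Rightarrow> nat \<Rightarrow> nat set"
    and y :: "nat \<Rightarrow> nat \<Rightarrow> real" and c :: "nat \<Rightarrow> real \<Rightarrow> real"
    and ctx :: "nat \<Rightarrow> nat \<Rightarrow> nat \<Rightarrow> real \<times> real"
    and p :: "nat \<Rightarrow> nat \<Rightarrow> real \<times> real \<Rightarrow> real"
    and sopt :: "nat \<Rightarrow> nat \<Rightarrow> nat set"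
    and sel :: "nat \<Rightarrow> (nat \<times> nat \<times> nat \<Rightarrow> bool) \<Rightarrow> nat \<Rightarrow> nat set"
  assumes N: "N \<ge> 1" and M: "M \<ge> 1" and T: "T \<ge> 1" and B: "B > 0"
    and avail: "\<And>m t. m \<in> {1..M} \<Longrightarrow> t \<in> {1..T} \<Longrightarrow> avail m t \<subseteq> {1..N}"
    and c_mono: "\<And>n. n \<in> {1..N} \<Longrightarrow> mono (c n)"
    and c_pos: "\<And>n t. n \<in> {1..N} \<Longrightarrow> t \<in> {1..T} \<Longrightarrow> c n (y n t) > 0"
    and ctx: "\<And>t n m. t \<in> {1..T} \<Longrightarrow> m \<in> {1..M} \<Longrightarrow> n \<in> avail m t \<Longrightarrow> ctx t n m \<in> Phi"
    and p01: "\<And>n m \<phi>. n \<in> {1..N} \<Longrightarrow> m \<in> {1..M} \<Longrightarrow> \<phi> \<in> Phi \<Longrightarrow> p n m \<phi> \<in> {0..1}"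
    and L: "L > 0" and \<alpha>: "\<alpha> > 0"
    and holder: "\<And>n m \<phi> \<phi>'. n \<in> {1..N} \<Longrightarrow> m \<in> {1..M} \<Longrightarrow> \<phi> \<in> Phi \<Longrightarrow> \<phi>' \<in> Phi \<Longrightarrow>
                   \<bar>p n m \<phi> - p n m \<phi>'\<bar> \<le> L * dist \<phi> \<phi>' powr \<alpha>"
    and opt: "\<And>t. t \<in> {1..T} \<Longrightarrow>
                feasible M B avail (\<lambda>n t. c n (y n t)) t (sopt t) \<and>
                (\<forall>s. feasible M B avail (\<lambda>n t. c n (y n t)) t s \<longrightarrow>
                   util M s (\<lambda>n m. p n m (ctx t n m)) \<le> util M (sopt t) (\<lambda>n m. p n m (ctx t n m)))"
    and policy: "is_COCS T M B avail (\<lambda>n t. c n (y n t)) ctx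
                   (\<lambda>t. real t powr (2 * \<alpha> / (3 * \<alpha> + 2)) * ln (real t))
                   (nat \<lceil>real T powr ((2 * \<alpha> / (3 * \<alpha> + 2)) / (2 * \<alpha>))\<rceil>) sel"
  shows "let cmin = Min {c n (y n t) | n t. n \<in> {1..N} \<and> t \<in> {1..T}};
             e = (2 * \<alpha> + 2) / (3 * \<alpha> + 2)
         in exp_regret T M (outcomes T N M p ctx) sopt sel
            \<le> 4 * real N ^ 2 * real M * B / cmin
                 * (ln (real T) * real T powr e + real T powr (2 / (3 * \<alpha> + 2)))
              + real N * real M * B / cmin
                 * (\<Sum>k = 1..nat \<lfloor>B / cmin\<rfloor>. real (N choose k)) * (pi ^ 2 / 3)
              + (3 * L * 2 powr (\<alpha> / 2) + (2 + 2 * L * 2 powr (\<alpha> / 2)) / e)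
                 * real N * real M * B / cmin * real T powr e"

proof -
  interpret setting N M T B L \<alpha> avail y c ctx p sopt sel
    by unfold_locales (fact assms)+
  show ?thesis by (rule main)
qed

end
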